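(* Let $0\le\gamma<1$ and $k\in[0,1)$. Let $f=h+\overline{g}$ be harmonic in $\Omega_\gamma$, where $h,g$ are analytic in $\Omega_\gamma$ with power series $h(z)=\sum_{n=0}^\infty a_nz^n$, $g(z)=\sum_{n=1}^\infty b_nz^n$ in $\mathbb{D}$, $|h(z)|\le1$ on $\Omega_\gamma$, and $|g'(z)|\le k|h'(z)|$ for $z\in\mathbb{D}$. Then $$|a_0|^2+\sum_{n=1}^\infty(|a_n|+|b_n|)r^n\le1\quad\text{for }0\le r\le R^k_{2,\gamma}:=\frac{1+\gamma}{2+k+\gamma}.$$ The radius $R^k_{2,\gamma}$ is best possible.
   Context: For $0\le\gamma<1$, $\Omega_\gamma:=\{z\in\mathbb{C}: |z+\frac{\gamma}{1-\gamma}|<\frac{1}{1-\gamma}\}$, a disk containing the unit disk $\mathbb{D}$. *)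

theory Defs
  imports "HOL-Complex_Analysis.Complex_Analysis"
begin

definition Omega :: "real \<Rightarrow> complex set" where
  "Omega \<gamma> = ball (- complex_of_real (\<gamma> / (1 - \<gamma>))) (1 / (1 - \<gamma>))"

definition admissible ::
  "real \<Rightarrow> real \<Rightarrow> (complex \<Rightarrow> complex) \<Rightarrow> (complex \<Rightarrow> complex)
     \<Rightarrow> (nat \<Rightarrow> complex) \<Rightarrow> (nat \<Rightarrow> complex) \<Rightarrow> bool" where
  "admissible \<gamma> k h g a b \<longleftrightarrow>
     h holomorphic_on Omega \<gamma> \<and> g holomorphic_on Omega \<gamma> \<and>
     (\<forall>z\<in>ball 0 1. (\<lambda>n. a n * z ^ n) sums h z) \<and>
     b 0 = 0 \<and> (\<forall>z\<in>ball 0 1. (\<lambda>n. b n * z ^ n) sums g z) \<and>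
     (\<forall>z\<in>Omega \<gamma>. norm (h z) \<le> 1) \<and>
     (\<forall>z\<in>ball 0 1. norm (deriv g z) \<le> k * norm (deriv h z))"

definition bohr_ineq :: "(nat \<Rightarrow> complex) \<Rightarrow> (nat \<Rightarrow> complex) \<Rightarrow> real \<Rightarrow> bool" where
  "bohr_ineq a b r \<longleftrightarrow>
     summable (\<lambda>n. (norm (a (Suc n)) + norm (b (Suc n))) * r ^ Suc n) \<and>
     (norm (a 0))\<^sup>2 + (\<Sum>n. (norm (a (Suc n)) + norm (b (Suc n))) * r ^ Suc n) \<le> 1"

end

theory Submission
  imports Defs
begin

lemma circ_coeff_integral:
  fixes f :: "complex \<Rightarrow> complex"
  assumes holf: "f holomorphic_on ball 0 1" and \<rho>: "0 < \<rho>" "\<rho> < 1"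
  shows "((\<lambda>t. f (circlepath 0 \<rho> t) * cnj (circlepath 0 \<rho> t) ^ n) has_integral
            ((deriv ^^ n) f 0 / fact n * of_real (\<rho> ^ (2*n)))) {0..1}"
proof -
  let ?g = "circlepath 0 \<rho>"
  have sub: "cball 0 \<rho> \<subseteq> ball (0::complex) 1" using \<rho> by auto
  have contf: "continuous_on (cball 0 \<rho>) f"
    using holomorphic_on_imp_continuous_on holomorphic_on_subset[OF holf sub] by blast
  have holf': "f holomorphic_on ball 0 \<rho>"
    by (rule holomorphic_on_subset[OF holf]) (use \<rho> in auto)
  have "((\<lambda>u. f u / (u - 0) ^ (Suc n)) has_contour_integral ((2 * pi * \<i>) / (fact n) * (deriv ^^ n) f 0))
           ?g"
    by (rule Cauchy_has_contour_integral_higher_derivative_circlepath[OF contf holf']) (use \<rho> in auto)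
  hence I: "((\<lambda>t. f (?g t) / (?g t) ^ Suc n * vector_derivative ?g (at t within {0..1}))
          has_integral ((2 * pi * \<i>) / (fact n) * (deriv ^^ n) f 0)) {0..1}"
    by (simp add: has_contour_integral_def)
  have gnorm: "?g t * cnj (?g t) = of_real (\<rho>^2)" for t
  proof -
    have "?g t * cnj (?g t) = of_real ((norm (?g t))^2)" by (metis complex_norm_square)
    also have "norm (?g t) = \<rho>" using \<rho> by (simp add: circlepath norm_mult)
    finally show ?thesis .
  qed
  have gnz: "?g t \<noteq> 0" for t using \<rho> by (simp add: circlepath)
  have eq: "f (?g t) / (?g t) ^ Suc n * vector_derivative ?g (at t within {0..1})
      = (2 * pi * \<i> / of_real (\<rho>^(2*n))) * (f (?g t) * cnj (?g t) ^ n)" if "t \<in> {0..1}" for t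
  proof -
    have vd: "vector_derivative ?g (at t within {0..1}) = 2 * pi * \<i> * ?g t"
      using that vector_derivative_circlepath01[of t 0 \<rho>] by (simp add: circlepath)
    have "cnj (?g t) ^ n = of_real (\<rho>^(2*n)) / ?g t ^ n"
    proof -
      have "(?g t * cnj (?g t))^n = of_real (\<rho>^(2*n))"
        by (simp add: gnorm power_mult)
      thus ?thesis using gnz by (simp add: field_simps power_mult_distrib)
    qed
    thus ?thesis using \<rho> gnz unfolding vd by (simp add: field_simps power_Suc)
  qed
  have "((\<lambda>t. (of_real (\<rho>^(2*n)) / (2 * pi * \<i>)) * (f (?g t) / (?g t) ^ Suc n * vector_derivative ?g (at t within {0..1})))
          has_integral ((of_real (\<rho>^(2*n)) / (2 * pi * \<i>)) * ((2 * pi * \<i>) / (fact n) * (deriv ^^ n) f 0))) {0..1}"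
    by (rule has_integral_mult_right[OF I])
  moreover have "(of_real (\<rho>^(2*n)) / (2 * pi * \<i>)) * ((2 * pi * \<i>) / (fact n) * (deriv ^^ n) f 0)
      = (deriv ^^ n) f 0 / fact n * of_real (\<rho> ^ (2*n))"
    by (simp add: field_simps)
  ultimately have I2: "((\<lambda>t. (of_real (\<rho>^(2*n)) / (2 * pi * \<i>)) * (f (?g t) / (?g t) ^ Suc n * vector_derivative ?g (at t within {0..1})))
          has_integral ((deriv ^^ n) f 0 / fact n * of_real (\<rho> ^ (2*n)))) {0..1}" by simp
  have aux: "(a/b)*((b/a)*X) = X" if "a \<noteq> 0" "b \<noteq> 0" for a b X :: complex
    using that by simp
  have eq2: "(of_real (\<rho>^(2*n)) / (2 * pi * \<i>)) * (f (?g t) / (?g t) ^ Suc n * vector_derivative ?g (at t within {0..1}))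
     = f (?g t) * cnj (?g t) ^ n" if "t \<in> {0..1}" for t
    unfolding eq[OF that] by (rule aux) (use \<rho> in auto)
  show ?thesis by (rule has_integral_eq[OF eq2 I2])
qed

lemma parseval:
  fixes f :: "complex \<Rightarrow> complex"
  assumes holf: "f holomorphic_on ball 0 1" and \<rho>: "0 < \<rho>" "\<rho> < 1"
  shows "summable (\<lambda>n. (norm ((deriv ^^ n) f 0 / fact n))^2 * \<rho>^(2*n))
     \<and> ((\<lambda>t. (norm (f (circlepath 0 \<rho> t)))^2) has_integral
          (\<Sum>n. (norm ((deriv ^^ n) f 0 / fact n))^2 * \<rho>^(2*n))) {0..1}"
proof -
  define c where "c n = (deriv ^^ n) f 0 / fact n" for n
  let ?g = "circlepath 0 \<rho>"
  have gnorm: "norm (?g t) = \<rho>" for t using \<rho> by (simp add: circlepath norm_mult)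
  have gin: "?g t \<in> ball 0 1" for t using \<rho> gnorm[of t] by simp
  have ser: "(\<lambda>n. c n * z ^ n) sums f z" if "z \<in> ball 0 1" for z
    using holomorphic_power_series[OF holf that] unfolding c_def by simp
  define term' where "term' i t = f (?g t) * cnj (c i) * cnj (?g t) ^ i" for i t
  have sums_t: "(\<lambda>i. term' i t) sums (f (?g t) * cnj (f (?g t)))" for t
  proof -
    have "(\<lambda>i. cnj (c i * ?g t ^ i)) sums cnj (f (?g t))"
      by (rule sums_cnj[THEN iffD2, OF ser[OF gin]])
    hence "(\<lambda>i. f (?g t) * cnj (c i * ?g t ^ i)) sums (f (?g t) * cnj (f (?g t)))"
      by (rule sums_mult)
    thus ?thesis by (simp add: term'_def mult.assoc)
  qed
  have sub: "cball 0 \<rho> \<subseteq> ball (0::complex) 1" using \<rho> by auto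
  have contf: "continuous_on (cball 0 \<rho>) f"
    using holomorphic_on_imp_continuous_on holomorphic_on_subset[OF holf sub] by blast
  have "bounded (f ` cball 0 \<rho>)"
    by (rule compact_imp_bounded[OF compact_continuous_image[OF contf compact_cball]])
  then obtain B where B0: "\<forall>x\<in>f ` cball 0 \<rho>. norm x \<le> B" unfolding bounded_iff by blast
  have B: "\<And>z. z \<in> cball 0 \<rho> \<Longrightarrow> norm (f z) \<le> B" using B0 by blast
  have gcb: "?g t \<in> cball 0 \<rho>" for t using gnorm by simp
  obtain \<rho>' where \<rho>': "\<rho> < \<rho>'" "\<rho>' < 1" using \<rho> dense by blast
  have "summable (\<lambda>n. c n * of_real \<rho>' ^ n)"
    using ser[of "of_real \<rho>'"] \<rho> \<rho>' by (simp add: sums_iff)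
  hence sumc: "summable (\<lambda>n. norm (c n * of_real \<rho> ^ n))"
    by (rule powser_insidea) (use \<rho> \<rho>' in simp)
  have unif: "uniform_limit {0..1} (\<lambda>N t. \<Sum>i<N. term' i t) (\<lambda>t. suminf (\<lambda>i. term' i t)) sequentially"
  proof (rule Weierstrass_m_test)
    show "summable (\<lambda>n. B * norm (c n * of_real \<rho> ^ n))"
      by (rule summable_mult[OF sumc])
    fix n t
    have "norm (term' n t) = norm (f (?g t)) * (norm (c n) * \<rho> ^ n)"
      by (simp add: term'_def norm_mult norm_power gnorm)
    also have "\<dots> \<le> B * (norm (c n) * \<rho> ^ n)"
      by (rule mult_right_mono) (use B[OF gcb] \<rho> in auto)
    finally show "norm (term' n t) \<le> B * norm (c n * of_real \<rho> ^ n)"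
      using \<rho> by (simp add: norm_mult norm_power)
  qed
  have contg: "continuous_on {0..1} (\<lambda>t. f (?g t))"
  proof (rule continuous_on_compose2[OF contf])
    show "continuous_on {0..1} ?g" by (simp add: circlepath continuous_intros)
  qed (use gcb in auto)
  have contN: "continuous_on {0..1} (\<lambda>t. \<Sum>i<N. term' i t)" for N
    unfolding term'_def
    by (intro continuous_intros contg) (simp_all add: circlepath continuous_intros)
  obtain I J where IJ: "\<And>N. ((\<lambda>t. \<Sum>i<N. term' i t) has_integral I N) {0..1}"
      "((\<lambda>t. suminf (\<lambda>i. term' i t)) has_integral J) {0..1}" "(I \<longlonglongrightarrow> J)"
    using uniform_limit_integral[OF unif contN] by auto
  have termint: "((\<lambda>t. term' i t) has_integral (of_real ((norm (c i))^2 * \<rho>^(2*i)))) {0..1}" for i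
  proof -
    have "((\<lambda>t. cnj (c i) * (f (?g t) * cnj (?g t) ^ i)) has_integral
            (cnj (c i) * (c i * of_real (\<rho> ^ (2*i))))) {0..1}"
      by (rule has_integral_mult_right, unfold c_def, rule circ_coeff_integral[OF holf \<rho>])
    moreover have "cnj (c i) * (c i * of_real (\<rho> ^ (2*i))) = of_real ((norm (c i))^2 * \<rho>^(2*i))"
      unfolding of_real_mult complex_norm_square by (simp add: mult_ac)
    ultimately have A: "((\<lambda>t. cnj (c i) * (f (?g t) * cnj (?g t) ^ i)) has_integral
            (of_real ((norm (c i))^2 * \<rho>^(2*i)))) {0..1}" by (simp only:)
    show ?thesis by (rule has_integral_eq[OF _ A]) (simp add: term'_def mult_ac)
  qed
  have IN: "I N = of_real (\<Sum>i<N. (norm (c i))^2 * \<rho>^(2*i))" for N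
    using has_integral_unique[OF IJ(1) has_integral_sum[OF _ termint]] by simp
  have lim: "(\<lambda>N. \<Sum>i<N. (norm (c i))^2 * \<rho>^(2*i)) \<longlonglongrightarrow> Re J"
    using tendsto_Re[OF IJ(3)] by (simp add: IN)
  hence sm: "(\<lambda>i. (norm (c i))^2 * \<rho>^(2*i)) sums Re J" by (simp add: sums_def)
  have J: "((\<lambda>t. of_real ((norm (f (?g t)))^2)) has_integral J) {0..1}"
  proof -
    have "((\<lambda>t. f (?g t) * cnj (f (?g t))) has_integral J) {0..1}"
      using IJ(2) sums_t by (simp add: sums_iff)
    thus ?thesis unfolding complex_norm_square .
  qed
  have "((Re \<circ> (\<lambda>t. of_real ((norm (f (?g t)))^2))) has_integral Re J) {0..1}"
    by (rule has_integral_linear[OF J bounded_linear_Re])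
  hence "((\<lambda>t. (norm (f (?g t)))^2) has_integral Re J) {0..1}" by (simp add: o_def)
  thus ?thesis using sm by (simp add: sums_iff c_def)
qed

lemma ode_mono:
  fixes y :: "nat \<Rightarrow> real"
  assumes S: "\<And>t. 0 \<le> t \<Longrightarrow> t < 1 \<Longrightarrow> summable (\<lambda>n. \<bar>y n\<bar> * real (Suc n)^2 * t^n)"
    and P: "\<And>t. 0 \<le> t \<Longrightarrow> t < 1 \<Longrightarrow> (\<Sum>n. y n * real (Suc n)^2 * t^n) \<le> 0"
    and t: "0 \<le> t" "t < 1"
  shows "(\<Sum>n. y n * t^(Suc n)) \<le> 0"
proof -
  have S2: "summable (\<lambda>n. y n * real (Suc n) * real (Suc n) * x^n)" if "x \<in> {-1<..<1}" for x
  proof (rule summable_comparison_test'[OF S[of "\<bar>x\<bar>"]])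
    fix n
    show "norm (y n * real (Suc n) * real (Suc n) * x^n) \<le> \<bar>y n\<bar> * real (Suc n)^2 * \<bar>x\<bar>^n"
      by (simp add: abs_mult power_abs power2_eq_square)
  qed (use that in auto)
  have S1: "summable (\<lambda>n. y n * real (Suc n) * x^n)" if "x \<in> {-1<..<1}" for x
  proof (rule summable_comparison_test'[OF S[of "\<bar>x\<bar>"]])
    fix n
    have "\<bar>y n\<bar> * real (Suc n) * \<bar>x\<bar>^n \<le> \<bar>y n\<bar> * real (Suc n)^2 * \<bar>x\<bar>^n"
      by (intro mult_right_mono mult_left_mono) (auto simp: power2_eq_square)
    thus "norm (y n * real (Suc n) * x^n) \<le> \<bar>y n\<bar> * real (Suc n)^2 * \<bar>x\<bar>^n"
      by (simp add: abs_mult power_abs)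
  qed (use that in auto)
  define D1 where "D1 x = (\<Sum>n. (y n * real (Suc n)) * x^(Suc n))" for x :: real
  define Q where "Q x = (\<Sum>n. y n * x^(Suc n))" for x :: real
  have dD1: "DERIV D1 x :> (\<Sum>n. (y n * real (Suc n)) * real (Suc n) * x^n)" if "x \<in> {-1<..<1}" for x
    unfolding D1_def by (rule DERIV_power_series'[OF S2 that]) auto
  have dQ: "DERIV Q x :> (\<Sum>n. y n * real (Suc n) * x^n)" if "x \<in> {-1<..<1}" for x
    unfolding Q_def by (rule DERIV_power_series'[OF S1 that]) auto
  have D1nonpos: "D1 x \<le> 0" if "0 \<le> x" "x < 1" for x
  proof -
    have "D1 x \<le> D1 0"
    proof (rule DERIV_nonpos_imp_nonincreasing[OF that(1)])
      fix u assume u: "0 \<le> u" "u \<le> x"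
      have "(\<Sum>n. (y n * real (Suc n)) * real (Suc n) * u^n) = (\<Sum>n. y n * real (Suc n)^2 * u^n)"
        by (simp add: power2_eq_square mult_ac)
      also have "\<dots> \<le> 0" using P[of u] u that by auto
      finally show "\<exists>d. DERIV D1 u :> d \<and> d \<le> 0" using dD1[of u] u that by auto
    qed
    also have "D1 0 = 0" by (simp add: D1_def)
    finally show ?thesis .
  qed
  have "Q t \<le> Q 0"
  proof (rule DERIV_nonpos_imp_nonincreasing[OF t(1)])
    fix u assume u: "0 \<le> u" "u \<le> t"
    have "(\<Sum>n. y n * real (Suc n) * u^n) \<le> 0"
    proof (cases "u = 0")
      case True
      have "(\<Sum>n. y n * real (Suc n) * u^n) = y 0" using True by simp
      also have "y 0 = (\<Sum>n. y n * real (Suc n)^2 * 0^n)" by simp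
      also have "\<dots> \<le> 0" using P[of 0] by simp
      finally show ?thesis .
    next
      case False
      have "u * (\<Sum>n. y n * real (Suc n) * u^n) = (\<Sum>n. u * (y n * real (Suc n) * u^n))"
      proof -
        have "summable (\<lambda>n. y n * real (Suc n) * u^n)" using S1[of u] u t by auto
        from suminf_mult[OF this, of u] show ?thesis by simp
      qed
      also have "\<dots> = D1 u" unfolding D1_def by (simp add: mult_ac)
      also have "\<dots> \<le> 0" using D1nonpos[of u] u t by simp
      finally have "u * (\<Sum>n. y n * real (Suc n) * u^n) \<le> 0" .
      thus ?thesis using False u by (simp add: mult_le_0_iff)
    qed
    thus "\<exists>d. DERIV Q u :> d \<and> d \<le> 0" using dQ[of u] u t by auto
  qed
  also have "Q 0 = 0" by (simp add: Q_def)
  finally show ?thesis by (simp add: Q_def)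
qed

lemma le_one_from_radii:
  fixes x :: real
  assumes "\<And>\<rho>. 0 < \<rho> \<Longrightarrow> \<rho> < 1 \<Longrightarrow> x \<le> 1 / \<rho>^n"
  shows "x \<le> 1"
proof -
  have "((\<lambda>\<rho>. 1 / \<rho>^n) \<longlongrightarrow> 1 / 1^n) (at_left (1::real))"
    by (intro tendsto_intros) auto
  moreover have "eventually (\<lambda>\<rho>. \<rho> \<in> {0<..<1}) (at_left (1::real))"
    by (rule eventually_at_left_real) simp
  hence "eventually (\<lambda>\<rho>. x \<le> 1 / \<rho>^n) (at_left (1::real))"
    by eventually_elim (use assms in auto)
  ultimately have "x \<le> 1 / 1^n"
    by (intro tendsto_le[OF trivial_limit_at_left_real _ tendsto_const]) auto
  thus ?thesis by simp
qed

lemma roots_sum: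
  fixes n m :: nat
  assumes n: "n \<ge> 1"
  defines "\<omega> \<equiv> exp (2 * of_real pi * \<i> / of_nat n)"
  shows "(\<Sum>j<n. (\<omega>^j)^m) = (if n dvd m then of_nat n else 0)"
proof -
  have wm: "\<omega>^m = exp (2 * of_real pi * \<i> * of_nat m / of_nat n)"
    unfolding \<omega>_def exp_of_nat_mult[symmetric] by (simp add: field_simps)
  have wn: "\<omega>^n = 1"
    unfolding \<omega>_def exp_of_nat_mult[symmetric] using n by (simp add: field_simps)
  have "(\<Sum>j<n. (\<omega>^j)^m) = (\<Sum>j<n. (\<omega>^m)^j)" by (metis power_mult mult.commute)
  also have "\<dots> = (if \<omega>^m = 1 then of_nat n else (1 - (\<omega>^m)^n) / (1 - \<omega>^m))"
    by (rule sum_gp_strict)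
  also have "(\<omega>^m)^n = 1" by (metis power_mult mult.commute wn power_one)
  also have "\<omega>^m = 1 \<longleftrightarrow> n dvd m" unfolding wm by (rule complex_root_unity_eq_1[OF n])
  finally show ?thesis by simp
qed

lemma norm_root: "norm (exp (2 * of_real pi * \<i> / of_nat n)) = 1"
  by (simp add: norm_exp_eq_Re)

lemma mobius_le1:
  fixes w c :: complex
  assumes "norm w \<le> 1" "norm c < 1"
  shows "norm ((w - c) / (1 - cnj c * w)) \<le> 1"
proof -
  have nz: "1 - cnj c * w \<noteq> 0"
  proof
    assume "1 - cnj c * w = 0"
    hence "norm (cnj c * w) = 1" by (metis eq_iff_diff_eq_0 norm_one)
    moreover have "norm (cnj c * w) < 1"
    proof -
      have "norm c * norm w \<le> norm c" using assms(1) by (simp add: mult_left_le)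
      thus ?thesis using assms(2) by (simp add: norm_mult)
    qed
    ultimately show False by simp
  qed
  have key: "(norm (1 - cnj c * w))^2 - (norm (w - c))^2 = (1 - (norm w)^2) * (1 - (norm c)^2)"
  proof -
    obtain a b where w: "w = Complex a b" by (cases w)
    obtain p q where c: "c = Complex p q" by (cases c)
    show ?thesis unfolding w c by (simp only: cmod_power2) (simp add: power2_eq_square algebra_simps)
  qed
  have "(1 - (norm w)^2) * (1 - (norm c)^2) \<ge> 0"
  proof (rule mult_nonneg_nonneg)
    have "(norm w)^2 \<le> 1" using assms(1) power_le_one[of "norm w" 2] by simp
    thus "0 \<le> 1 - (norm w)^2" by simp
    have "(norm c)^2 \<le> 1" using assms(2) power_le_one[of "norm c" 2] by simp
    thus "0 \<le> 1 - (norm c)^2" by simp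
  qed
  hence "(norm (w - c))^2 \<le> (norm (1 - cnj c * w))^2"
    using key by linarith
  hence le: "norm (w - c) \<le> norm (1 - cnj c * w)"
    by (rule power2_le_imp_le) simp
  have pos: "norm (1 - cnj c * w) > 0" using nz by simp
  show ?thesis unfolding norm_divide using le pos by (simp add: pos_divide_le_eq)
qed

lemma disk_coeff_strict:
  fixes K :: "complex \<Rightarrow> complex"
  assumes holK: "K holomorphic_on ball 0 1" and bd: "\<And>z. z \<in> ball 0 1 \<Longrightarrow> norm (K z) \<le> 1"
    and K0: "norm (K 0) < 1" and n: "n \<ge> 1"
  shows "norm ((deriv ^^ n) K 0 / fact n) \<le> 1 - (norm (K 0))^2"
proof -
  define c0 where "c0 = K 0"
  define \<omega> where "\<omega> = exp (2 * of_real pi * \<i> / of_nat n)"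
  have n\<omega>: "norm (\<omega>^j) = 1" for j by (simp add: \<omega>_def norm_power norm_root)
  define Kn where "Kn \<zeta> = (1 / of_nat n) * (\<Sum>j<n. K (\<omega>^j * \<zeta>))" for \<zeta>
  define KF where "KF = fps_expansion K 0"
  have KFexp: "K has_fps_expansion KF" unfolding KF_def
    by (rule has_fps_expansion_fps_expansion[OF _ _ holK]) auto
  have KFn: "KF $ m = (deriv ^^ m) K 0 / fact m" for m unfolding KF_def by (simp add: fps_expansion_def)
  have KF0: "KF $ 0 = c0" by (simp add: KFn c0_def)
  define KnF where "KnF = fps_const (1 / of_nat n) * (\<Sum>j<n. KF oo (fps_const (\<omega>^j) * fps_X))"
  have KnFexp: "Kn has_fps_expansion KnF"
  proof -
    have "(\<lambda>\<zeta>. \<Sum>j<n. K (\<omega>^j * \<zeta>)) has_fps_expansion (\<Sum>j<n. KF oo (fps_const (\<omega>^j) * fps_X))"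
    proof (rule has_fps_expansion_sum)
      fix j
      have "(K \<circ> (\<lambda>\<zeta>. \<omega>^j * \<zeta>)) has_fps_expansion (KF oo (fps_const (\<omega>^j) * fps_X))"
        by (rule has_fps_expansion_compose[OF KFexp]) (auto intro!: fps_expansion_intros)
      thus "(\<lambda>\<zeta>. K (\<omega>^j * \<zeta>)) has_fps_expansion (KF oo (fps_const (\<omega>^j) * fps_X))"
        by (simp add: o_def)
    qed
    thus ?thesis unfolding Kn_def KnF_def by (rule has_fps_expansion_cmult_left)
  qed
  have KnFn: "KnF $ m = (if n dvd m then KF $ m else 0)" for m
  proof -
    have "KnF $ m = (1/of_nat n) * ((\<Sum>j<n. (\<omega>^j)^m) * KF $ m)"
      unfolding KnF_def by (simp add: fps_sum_nth fps_compose_linear sum_distrib_right)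
    also have "(\<Sum>j<n. (\<omega>^j)^m) = (if n dvd m then of_nat n else 0)"
      unfolding \<omega>_def by (rule roots_sum[OF n])
    finally show ?thesis using n by simp
  qed
  have holKn: "Kn holomorphic_on ball 0 1"
  proof -
    have "(\<lambda>\<zeta>. K (\<omega>^j * \<zeta>)) holomorphic_on ball 0 1" for j
    proof -
      have "(K \<circ> (\<lambda>\<zeta>. \<omega>^j * \<zeta>)) holomorphic_on ball 0 1"
        by (rule holomorphic_on_compose_gen[OF _ holK]) (auto intro!: holomorphic_intros simp: norm_mult n\<omega>)
      thus ?thesis by (simp add: o_def)
    qed
    thus ?thesis unfolding Kn_def by (intro holomorphic_intros) auto
  qed
  have bdKn: "norm (Kn \<zeta>) \<le> 1" if "\<zeta> \<in> ball 0 1" for \<zeta>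
  proof -
    have "norm (\<Sum>j<n. K (\<omega>^j * \<zeta>)) \<le> (\<Sum>j<n. norm (K (\<omega>^j * \<zeta>)))" by (rule norm_sum)
    also have "\<dots> \<le> (\<Sum>j<n. 1)"
      by (intro sum_mono bd) (use that in \<open>auto simp: norm_mult n\<omega>\<close>)
    finally have "norm (\<Sum>j<n. K (\<omega>^j * \<zeta>)) \<le> of_nat n" by simp
    thus ?thesis using n unfolding Kn_def by (simp add: norm_mult norm_divide field_simps)
  qed
  have c0lt: "norm c0 < 1" using K0 by (simp add: c0_def)
  have den_nz: "1 - cnj c0 * Kn \<zeta> \<noteq> 0" if "\<zeta> \<in> ball 0 1" for \<zeta>
  proof
    assume "1 - cnj c0 * Kn \<zeta> = 0"
    hence "norm (cnj c0 * Kn \<zeta>) = 1" by (metis eq_iff_diff_eq_0 norm_one)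
    moreover have "norm c0 * norm (Kn \<zeta>) \<le> norm c0" using bdKn[OF that] by (simp add: mult_left_le)
    ultimately show False using c0lt by (simp add: norm_mult)
  qed
  define M where "M \<zeta> = (Kn \<zeta> - c0) * inverse (1 - cnj c0 * Kn \<zeta>)" for \<zeta>
  define MF where "MF = (KnF - fps_const c0) * inverse (1 - fps_const (cnj c0) * KnF)"
  have KnF0: "KnF $ 0 = c0" using KnFn[of 0] KF0 by simp
  have cc: "cnj c0 * c0 = of_real (1 - (1 - (norm c0)^2))"
    using complex_norm_square[of c0] by (simp add: mult.commute)
  have den0: "1 - cnj c0 * c0 = of_real (1 - (norm c0)^2)" unfolding cc by simp
  have dpos: "1 - (norm c0)^2 > 0"
    using c0lt power_strict_mono[of "norm c0" 1 2] by simp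
  have MFexp: "M has_fps_expansion MF"
    unfolding M_def MF_def
  proof (intro has_fps_expansion_mult has_fps_expansion_inverse has_fps_expansion_diff
      KnFexp has_fps_expansion_const has_fps_expansion_1 has_fps_expansion_cmult_left[where c = "cnj c0", simplified fps_const_mult_apply_left])
    have "(1 - fps_const (cnj c0) * KnF) $ 0 = 1 - cnj c0 * c0" using KnF0 by simp
    also have "\<dots> = of_real (1 - (norm c0)^2)" by (rule den0)
    finally show "(1 - fps_const (cnj c0) * KnF) $ 0 \<noteq> 0" using dpos by (metis of_real_eq_0_iff less_irrefl)
  qed
  have MFn: "MF $ n = ((deriv ^^ n) K 0 / fact n) / (1 - cnj c0 * c0)"
  proof -
    let ?A = "KnF - fps_const c0" and ?B = "inverse (1 - fps_const (cnj c0) * KnF)"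
    have "MF $ n = (\<Sum>i=0..n. ?A $ i * ?B $ (n - i))" unfolding MF_def by (rule fps_mult_nth)
    also have "\<dots> = ?A $ n * ?B $ (n - n) + (\<Sum>i\<in>{0..n} - {n}. ?A $ i * ?B $ (n - i))"
      by (rule sum.remove) auto
    also have "(\<Sum>i\<in>{0..n} - {n}. ?A $ i * ?B $ (n - i)) = 0"
    proof (rule sum.neutral, rule ballI)
      fix i assume "i \<in> {0..n} - {n}"
      hence i: "i \<in> {0..n}" "i \<notin> {n}" by auto
      have "?A $ i = 0"
      proof (cases "i = 0")
        case True thus ?thesis using KnF0 by simp
      next
        case False
        hence "\<not> n dvd i" using i by (auto dest: dvd_imp_le)
        thus ?thesis using False by (simp add: KnFn)
      qed
      thus "?A $ i * ?B $ (n - i) = 0" by simp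
    qed
    also have "?A $ n = KF $ n" using n by (simp add: KnFn)
    also have "?B $ (n - n) = inverse (1 - cnj c0 * c0)" using KnF0 by simp
    finally show ?thesis by (simp add: KFn divide_inverse)
  qed
  have holM: "M holomorphic_on ball 0 1"
    unfolding M_def by (intro holomorphic_intros holKn) (use den_nz in auto)
  have bdM: "norm (M \<zeta>) \<le> 1" if "\<zeta> \<in> ball 0 1" for \<zeta>
    using mobius_le1[OF bdKn[OF that] c0lt] by (simp add: M_def divide_inverse)
  have "norm (MF $ n) \<le> 1"
  proof (rule le_one_from_radii)
    fix \<rho> :: real assume \<rho>: "0 < \<rho>" "\<rho> < 1"
    have "norm ((deriv ^^ n) M 0) \<le> fact n * 1 / \<rho>^n"
    proof (rule Cauchy_inequality)
      show "M holomorphic_on ball 0 \<rho>" by (rule holomorphic_on_subset[OF holM]) (use \<rho> in auto)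
      have "M holomorphic_on cball 0 \<rho>" by (rule holomorphic_on_subset[OF holM]) (use \<rho> in auto)
      thus "continuous_on (cball 0 \<rho>) M" by (rule holomorphic_on_imp_continuous_on)
      fix x :: complex assume "norm (0 - x) = \<rho>"
      thus "norm (M x) \<le> 1" using \<rho> by (intro bdM) auto
    qed (use \<rho> in auto)
    hence ineq: "norm ((deriv ^^ n) M 0) \<le> fact n * 1 / \<rho>^n" .
    have e: "MF $ n = (deriv ^^ n) M 0 / fact n" by (rule fps_nth_fps_expansion[OF MFexp])
    have "norm (MF $ n) = norm ((deriv ^^ n) M 0) / fact n" unfolding e norm_divide by simp
    also have "\<dots> \<le> (fact n * 1 / \<rho>^n) / fact n" by (rule divide_right_mono[OF ineq]) simp
    also have "\<dots> = 1 / \<rho>^n" by simp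
    finally show "norm (MF $ n) \<le> 1 / \<rho>^n" .
  qed
  moreover have "norm (MF $ n) = norm ((deriv ^^ n) K 0 / fact n) / (1 - (norm c0)^2)"
    unfolding MFn den0 norm_divide[of "(deriv ^^ n) K 0 / fact n"] norm_of_real using dpos by simp
  ultimately have "norm ((deriv ^^ n) K 0 / fact n) / (1 - (norm c0)^2) \<le> 1" by simp
  hence "norm ((deriv ^^ n) K 0 / fact n) \<le> 1 * (1 - (norm c0)^2)"
    by (simp only: pos_divide_le_eq[OF dpos])
  thus ?thesis by (simp add: c0_def)
qed

lemma inv_lin:
  fixes c d :: "'a::field"
  assumes c: "c \<noteq> 0"
  shows "inverse (fps_const c - fps_const d * fps_X) = Abs_fps (\<lambda>m. d^m / c^(Suc m))"
proof (rule fps_inverse_unique, rule fps_ext)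
  fix m
  have e: "(fps_const c - fps_const d * fps_X) * Abs_fps (\<lambda>m. d^m / c^(Suc m))
      = fps_const c * Abs_fps (\<lambda>m. d^m / c^(Suc m)) - fps_const d * (fps_X * Abs_fps (\<lambda>m. d^m / c^(Suc m)))"
    by (simp add: algebra_simps)
  show "((fps_const c - fps_const d * fps_X) * Abs_fps (\<lambda>m. d^m / c^(Suc m))) $ m = 1 $ m"
    using c by (cases m) (simp_all add: e field_simps)
qed

definition PhiR :: "real \<Rightarrow> real fps" where
  "PhiR \<gamma> = fps_X * inverse (fps_const (1 + \<gamma>) - fps_const \<gamma> * fps_X)"

lemma PhiR_nth:
  assumes "0 \<le> \<gamma>"
  shows "PhiR \<gamma> $ m = (if m = 0 then 0 else \<gamma>^(m-1) / (1+\<gamma>)^m)"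
proof -
  have "1 + \<gamma> \<noteq> 0" using assms by simp
  thus ?thesis unfolding PhiR_def inv_lin[OF \<open>1 + \<gamma> \<noteq> 0\<close>]
    by (cases m) auto
qed

lemma PhiR_nonneg:
  assumes "0 \<le> \<gamma>"
  shows "(PhiR \<gamma> ^ i) $ m \<ge> 0"
proof (induction i arbitrary: m)
  case 0 thus ?case by simp
next
  case (Suc i)
  have "(PhiR \<gamma> ^ Suc i) $ m = (\<Sum>j=0..m. PhiR \<gamma> $ j * (PhiR \<gamma> ^ i) $ (m - j))"
    by (simp add: fps_mult_nth)
  also have "\<dots> \<ge> 0"
    by (intro sum_nonneg mult_nonneg_nonneg Suc.IH) (use assms in \<open>auto simp: PhiR_nth\<close>)
  finally show ?case .
qed

lemma PhiR_sum:
  assumes g: "0 \<le> \<gamma>" and n: "n \<ge> 1"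
  shows "(\<Sum>i=0..n. (PhiR \<gamma> ^ i) $ n) = 1 / (1 + \<gamma>)"
proof -
  define c where "c = 1 + \<gamma>"
  have c0: "c \<noteq> 0" using g by (simp add: c_def)
  define D where "D = fps_const c - fps_const \<gamma> * fps_X"
  have D0: "D $ 0 \<noteq> 0" using c0 by (simp add: D_def)
  define GR where "GR = (Abs_fps (\<lambda>_. 1) :: real fps)"
  have GR: "GR = inverse (1 - fps_X)"
  proof -
    have "inverse (inverse GR) = GR" by (rule fps_inverse_idempotent) (simp add: GR_def)
    thus ?thesis unfolding GR_def fps_inverse_gp' by simp
  qed
  have P0: "PhiR \<gamma> $ 0 = 0" using PhiR_nth[OF g] by simp
  have "(\<Sum>i=0..n. (PhiR \<gamma> ^ i) $ n) = (GR oo PhiR \<gamma>) $ n"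
    by (simp add: fps_compose_nth GR_def)
  also have "GR oo PhiR \<gamma> = inverse ((1 - fps_X) oo PhiR \<gamma>)"
    unfolding GR by (rule fps_inverse_compose[OF P0]) simp
  also have "(1 - fps_X) oo PhiR \<gamma> = 1 - PhiR \<gamma>"
    by (simp add: fps_compose_sub_distrib P0)
  also have "inverse (1 - PhiR \<gamma>) = fps_const (1/c) * D * GR"
  proof (rule fps_inverse_unique)
    have ID: "inverse D * D = 1" by (rule inverse_mult_eq_1[OF D0])
    have PhD: "PhiR \<gamma> = fps_X * inverse D" by (simp add: PhiR_def D_def c_def)
    have PD: "PhiR \<gamma> * D = fps_X" unfolding PhD by (simp add: mult.assoc ID)
    have "D - fps_X = fps_const c * (1 - fps_X)"
      unfolding D_def c_def by (simp add: algebra_simps fps_const_add[symmetric])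
    have "(1 - PhiR \<gamma>) * (fps_const (1/c) * D * GR) = fps_const (1/c) * ((D - PhiR \<gamma> * D) * GR)"
      by (simp add: algebra_simps)
    also have "D - PhiR \<gamma> * D = fps_const c * (1 - fps_X)"
      unfolding PD by fact
    also have "fps_const (1/c) * (fps_const c * (1 - fps_X) * GR) = fps_const (1/c * c) * ((1 - fps_X) * GR)"
      by (simp add: mult.assoc)
    also have "(1 - fps_X) * GR = 1" unfolding GR by (rule inverse_mult_eq_1') simp
    finally show "(1 - PhiR \<gamma>) * (fps_const (1/c) * D * GR) = 1" using c0 by simp
  qed
  also have "(fps_const (1/c) * D * GR) $ n = 1 / c"
  proof -
    have e: "fps_const (1/c) * D * GR = fps_const (1/c) * (fps_const c * GR - fps_const \<gamma> * (fps_X * GR))"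
      unfolding D_def by (simp add: algebra_simps)
    show ?thesis unfolding e using n c0 by (simp add: GR_def c_def field_simps)
  qed
  finally show ?thesis by (simp add: c_def)
qed

definition fps_ofr :: "real fps \<Rightarrow> complex fps" where
  "fps_ofr R = Abs_fps (\<lambda>m. complex_of_real (fps_nth R m))"

lemma fps_ofr_mult: "fps_ofr (R * S) = fps_ofr R * fps_ofr S"
  by (rule fps_ext) (simp add: fps_ofr_def fps_mult_nth)

lemma fps_ofr_one: "fps_ofr 1 = 1"
  by (rule fps_ext) (simp add: fps_ofr_def)

lemma fps_ofr_power: "fps_ofr (R ^ i) = fps_ofr R ^ i"
  by (induction i) (simp_all add: fps_ofr_one fps_ofr_mult)

lemma psi_in_Omega:
  fixes \<zeta> :: complex
  assumes g: "0 \<le> \<gamma>" "\<gamma> < 1" and z: "norm \<zeta> < 1"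
  shows "of_real (1+\<gamma>) * \<zeta> / (1 + of_real \<gamma> * \<zeta>) \<in> Omega \<gamma>"
proof -
  have key: "(norm (1 + of_real \<gamma> * \<zeta>))^2 - (norm (\<zeta> + of_real \<gamma>))^2 = (1 - \<gamma>^2) * (1 - (norm \<zeta>)^2)"
  proof -
    obtain a b where w: "\<zeta> = Complex a b" by (cases \<zeta>)
    show ?thesis unfolding w by (simp only: cmod_power2) (simp add: power2_eq_square algebra_simps)
  qed
  have "(1 - \<gamma>^2) * (1 - (norm \<zeta>)^2) > 0"
  proof (rule mult_pos_pos)
    have "\<gamma>^2 < 1" using g power_strict_mono[of \<gamma> 1 2] by simp
    thus "0 < 1 - \<gamma>^2" by simp
    have "(norm \<zeta>)^2 < 1" using z power_strict_mono[of "norm \<zeta>" 1 2] by simp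
    thus "0 < 1 - (norm \<zeta>)^2" by simp
  qed
  hence "(norm (\<zeta> + of_real \<gamma>))^2 < (norm (1 + of_real \<gamma> * \<zeta>))^2" using key by linarith
  hence lt: "norm (\<zeta> + of_real \<gamma>) < norm (1 + of_real \<gamma> * \<zeta>)"
    by (rule power2_less_imp_less) (rule norm_ge_zero)
  have nz: "1 + of_real \<gamma> * \<zeta> \<noteq> 0" using lt by auto
  have g1: "(1 - of_real \<gamma> :: complex) \<noteq> 0" using g
    by (metis eq_iff_diff_eq_0 less_irrefl of_real_1 of_real_eq_iff)
  have eq: "of_real (1+\<gamma>) * \<zeta> / (1 + of_real \<gamma> * \<zeta>) + of_real (\<gamma> / (1 - \<gamma>))
      = (\<zeta> + of_real \<gamma>) / ((1 - of_real \<gamma>) * (1 + of_real \<gamma> * \<zeta>))"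
    using nz g1 g by (simp add: field_simps of_real_divide)
  have "norm ((\<zeta> + of_real \<gamma>) / ((1 - of_real \<gamma>) * (1 + of_real \<gamma> * \<zeta>)))
      = norm (\<zeta> + of_real \<gamma>) / ((1 - \<gamma>) * norm (1 + of_real \<gamma> * \<zeta>))"
  proof -
    have "norm (1 - of_real \<gamma> :: complex) = 1 - \<gamma>"
      using g by (metis abs_of_pos diff_gt_0_iff_gt norm_of_real of_real_1 of_real_diff)
    thus ?thesis by (simp add: norm_divide norm_mult)
  qed
  also have "\<dots> < 1 / (1 - \<gamma>)"
  proof -
    have bpos: "norm (1 + of_real \<gamma> * \<zeta>) > 0" using nz by simp
    have "norm (\<zeta> + of_real \<gamma>) / norm (1 + of_real \<gamma> * \<zeta>) < 1" using lt bpos by simp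
    hence "(norm (\<zeta> + of_real \<gamma>) / norm (1 + of_real \<gamma> * \<zeta>)) / (1 - \<gamma>) < 1 / (1 - \<gamma>)"
      by (rule divide_strict_right_mono) (use g in simp)
    thus ?thesis by (simp add: divide_divide_eq_left mult.commute)
  qed
  finally have fin: "norm ((\<zeta> + of_real \<gamma>) / ((1 - of_real \<gamma>) * (1 + of_real \<gamma> * \<zeta>))) < 1 / (1 - \<gamma>)" .
  have fin2: "norm (of_real (1+\<gamma>) * \<zeta> / (1 + of_real \<gamma> * \<zeta>) + of_real (\<gamma> / (1 - \<gamma>))) < 1 / (1 - \<gamma>)"
    by (simp only: eq) (rule fin)
  have e2: "- complex_of_real (\<gamma> / (1 - \<gamma>)) - of_real (1+\<gamma>) * \<zeta> / (1 + of_real \<gamma> * \<zeta>)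
     = - (of_real (1+\<gamma>) * \<zeta> / (1 + of_real \<gamma> * \<zeta>) + of_real (\<gamma> / (1 - \<gamma>)))" by simp
  show ?thesis unfolding Omega_def mem_ball dist_norm e2 norm_minus_cancel by (rule fin2)
qed

lemma disk_coeff:
  fixes K :: "complex \<Rightarrow> complex"
  assumes holK: "K holomorphic_on ball 0 1" and bd: "\<And>z. z \<in> ball 0 1 \<Longrightarrow> norm (K z) \<le> 1"
    and n: "n \<ge> 1"
  shows "norm ((deriv ^^ n) K 0 / fact n) \<le> 1 - (norm (K 0))^2"
proof -
  define X where "X = norm ((deriv ^^ n) K 0 / fact n)"
  have K0: "norm (K 0) \<le> 1" using bd[of 0] by simp
  have le: "t * X \<le> 1 - t^2 * (norm (K 0))^2" if t: "0 < t" "t < 1" for t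
  proof -
    have hol: "(\<lambda>z. of_real t * K z) holomorphic_on ball 0 1" by (intro holomorphic_intros holK)
    have "norm ((deriv ^^ n) (\<lambda>z. of_real t * K z) 0 / fact n) \<le> 1 - (norm (of_real t * K 0))^2"
    proof (rule disk_coeff_strict[OF hol _ _ n])
      fix z :: complex assume "z \<in> ball 0 1"
      hence "norm (K z) \<le> 1" by (rule bd)
      thus "norm (of_real t * K z) \<le> 1" using t by (simp add: norm_mult mult_le_one)
    next
      have "t * norm (K 0) \<le> t" by (rule mult_left_le) (use t K0 in auto)
      moreover have "norm (of_real t * K 0) = t * norm (K 0)" using t by (simp add: norm_mult)
      ultimately show "norm (of_real t * K 0) < 1" using t by linarith
    qed
    also have "(deriv ^^ n) (\<lambda>z. of_real t * K z) 0 = of_real t * (deriv ^^ n) K 0"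
      by (rule higher_deriv_cmult[OF holK]) auto
    finally have A: "norm (of_real t * (deriv ^^ n) K 0 / fact n) \<le> 1 - t^2 * (norm (K 0))^2"
      using t by (simp add: norm_mult power_mult_distrib)
    have "norm (of_real t * (deriv ^^ n) K 0 / fact n) = t * X"
      unfolding X_def using t by (simp add: norm_mult norm_divide)
    thus ?thesis using A by simp
  qed
  have L1: "((\<lambda>t. t * X) \<longlongrightarrow> 1 * X) (at_left (1::real))" by (intro tendsto_intros)
  have L2: "((\<lambda>t. 1 - t^2 * (norm (K 0))^2) \<longlongrightarrow> 1 - 1^2 * (norm (K 0))^2) (at_left (1::real))"
    by (intro tendsto_intros)
  have "eventually (\<lambda>t. t \<in> {0<..<1}) (at_left (1::real))"
    by (rule eventually_at_left_real) simp
  hence ev: "eventually (\<lambda>t. t * X \<le> 1 - t^2 * (norm (K 0))^2) (at_left (1::real))"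
    by eventually_elim (use le in auto)
  have "1 * X \<le> 1 - 1^2 * (norm (K 0))^2"
    by (rule tendsto_le[OF trivial_limit_at_left_real L2 L1 ev])
  thus ?thesis by (simp add: X_def)
qed

lemma omega_coeff:
  fixes h :: "complex \<Rightarrow> complex"
  assumes g: "0 \<le> \<gamma>" "\<gamma> < 1" and holh: "h holomorphic_on Omega \<gamma>"
    and bdh: "\<And>z. z \<in> Omega \<gamma> \<Longrightarrow> norm (h z) \<le> 1" and n: "n \<ge> 1"
  shows "norm ((deriv ^^ n) h 0 / fact n) \<le> (1 - (norm (h 0))^2) / (1 + \<gamma>)"
proof -
  define \<psi> where "\<psi> \<zeta> = of_real (1+\<gamma>) * \<zeta> / (1 + of_real \<gamma> * \<zeta>)" for \<zeta> :: complex
  define \<phi> where "\<phi> z = z * inverse (of_real (1+\<gamma>) - of_real \<gamma> * z)" for z :: complex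
  define K where "K = h \<circ> \<psi>"
  have psiin: "\<psi> \<zeta> \<in> Omega \<gamma>" if "\<zeta> \<in> ball 0 1" for \<zeta>
    unfolding \<psi>_def by (rule psi_in_Omega[OF g]) (use that in simp)
  have den: "1 + of_real \<gamma> * \<zeta> \<noteq> 0" if "\<zeta> \<in> ball 0 1" for \<zeta> :: complex
  proof
    assume "1 + of_real \<gamma> * \<zeta> = 0"
    hence "norm (of_real \<gamma> * \<zeta>) = 1" by (metis add_eq_0_iff norm_minus_cancel norm_one)
    moreover have "norm (of_real \<gamma> * \<zeta>) < 1"
    proof -
      have "\<gamma> * norm \<zeta> \<le> \<gamma>" by (rule mult_left_le) (use g that in auto)
      moreover have "norm (of_real \<gamma> * \<zeta>) = \<gamma> * norm \<zeta>" using g by (simp add: norm_mult)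
      ultimately show ?thesis using g by linarith
    qed
    ultimately show False by simp
  qed
  have holpsi: "\<psi> holomorphic_on ball 0 1"
    unfolding \<psi>_def by (intro holomorphic_intros) (use den in auto)
  have holK: "K holomorphic_on ball 0 1"
    unfolding K_def by (rule holomorphic_on_compose_gen[OF holpsi holh]) (use psiin in auto)
  have bdK: "norm (K z) \<le> 1" if "z \<in> ball 0 1" for z
    unfolding K_def using bdh[OF psiin[OF that]] by simp
  have K0: "K 0 = h 0" by (simp add: K_def \<psi>_def)
  define KF where "KF = fps_expansion K 0"
  have KFexp: "K has_fps_expansion KF" unfolding KF_def
    by (rule has_fps_expansion_fps_expansion[OF _ _ holK]) auto
  have KFn: "KF $ m = (deriv ^^ m) K 0 / fact m" for m unfolding KF_def by (simp add: fps_expansion_def)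
  have KFb: "norm (KF $ i) \<le> 1 - (norm (h 0))^2" if "i \<ge> 1" for i
    unfolding KFn K0[symmetric] by (rule disk_coeff[OF holK bdK that]) auto
  define \<Phi> where "\<Phi> = fps_X * inverse (fps_const (of_real (1+\<gamma>)) - fps_const (of_real \<gamma>) * fps_X :: complex fps)"
  have c1: "(of_real (1+\<gamma>) :: complex) \<noteq> 0" proof -
    have "1 + \<gamma> \<noteq> 0" using g by simp
    thus ?thesis by (simp only: of_real_eq_0_iff) simp
  qed
  have \<Phi>ofr: "\<Phi> = fps_ofr (PhiR \<gamma>)"
  proof (rule fps_ext)
    fix m
    show "\<Phi> $ m = fps_ofr (PhiR \<gamma>) $ m"
      unfolding \<Phi>_def fps_ofr_def using PhiR_nth[OF g(1), of m] inv_lin[OF c1, of "of_real \<gamma>"]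
      by (cases m) (simp_all add: of_real_divide of_real_power)
  qed
  have \<Phi>0: "\<Phi> $ 0 = 0" by (simp add: \<Phi>_def)
  have phiexp: "\<phi> has_fps_expansion \<Phi>"
    unfolding \<phi>_def \<Phi>_def
  proof (intro has_fps_expansion_mult has_fps_expansion_inverse has_fps_expansion_diff
      has_fps_expansion_const has_fps_expansion_fps_X has_fps_expansion_cmult_left[where c = "of_real \<gamma>", simplified fps_const_mult_apply_left])
    show "(fps_const (complex_of_real (1 + \<gamma>)) - fps_const (complex_of_real \<gamma>) * fps_X) $ 0 \<noteq> 0"
      using c1 by simp
  qed
  have comp: "(K \<circ> \<phi>) has_fps_expansion (KF oo \<Phi>)"
    by (rule has_fps_expansion_compose[OF KFexp phiexp \<Phi>0])
  have evq: "eventually (\<lambda>z. (K \<circ> \<phi>) z = h z) (nhds 0)"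
  proof -
    have "eventually (\<lambda>z. z \<in> ball (0::complex) 1) (nhds 0)"
      by (rule eventually_nhds_in_open) auto
    thus ?thesis
    proof eventually_elim
      case (elim z)
      have nz1: "of_real (1+\<gamma>) - of_real \<gamma> * z \<noteq> 0"
      proof
        assume "of_real (1+\<gamma>) - of_real \<gamma> * z = 0"
        hence "norm (of_real \<gamma> * z) = 1 + \<gamma>" by (metis eq_iff_diff_eq_0 norm_of_real abs_of_nonneg g(1) add_nonneg_nonneg zero_le_one)
        moreover have "norm (of_real \<gamma> * z) \<le> \<gamma>"
        proof -
          have "\<gamma> * norm z \<le> \<gamma>" by (rule mult_left_le) (use g elim in auto)
          thus ?thesis using g by (simp add: norm_mult)
        qed
        ultimately show False by simp
      qed
      define D where "D = of_real (1+\<gamma>) - of_real \<gamma> * z"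
      have D0: "D \<noteq> 0" using nz1 by (simp add: D_def)
      have e1: "1 + of_real \<gamma> * (z * inverse D) = of_real (1+\<gamma>) * inverse D"
        using D0 by (simp add: D_def field_simps)
      have "\<psi> (\<phi> z) = of_real (1+\<gamma>) * (z * inverse D) / (of_real (1+\<gamma>) * inverse D)"
        unfolding \<psi>_def \<phi>_def D_def[symmetric] e1 ..
      also have "\<dots> = z * (of_real (1+\<gamma>) * inverse D) / (of_real (1+\<gamma>) * inverse D)"
        by (simp only: mult_ac)
      also have "\<dots> = z" using D0 c1 by (intro nonzero_mult_div_cancel_right) simp
      finally have "\<psi> (\<phi> z) = z" .
      thus ?case by (simp add: K_def)
    qed
  qed
  have hexp: "h has_fps_expansion (KF oo \<Phi>)"
    using comp has_fps_expansion_cong[OF evq refl] by simp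
  have "(deriv ^^ n) h 0 / fact n = (KF oo \<Phi>) $ n" by (rule fps_nth_fps_expansion[OF hexp, symmetric])
  also have "\<dots> = (\<Sum>i=0..n. KF $ i * (\<Phi> ^ i) $ n)" by (rule fps_compose_nth)
  finally have eqn: "(deriv ^^ n) h 0 / fact n = (\<Sum>i=0..n. KF $ i * (\<Phi> ^ i) $ n)" .
  have pw: "(\<Phi> ^ i) $ m = of_real ((PhiR \<gamma> ^ i) $ m)" for i m
    unfolding \<Phi>ofr fps_ofr_power[symmetric] by (simp add: fps_ofr_def)
  have "norm ((deriv ^^ n) h 0 / fact n) \<le> (\<Sum>i=0..n. norm (KF $ i * (\<Phi> ^ i) $ n))"
    unfolding eqn by (rule norm_sum)
  also have "\<dots> \<le> (\<Sum>i=0..n. (1 - (norm (h 0))^2) * (PhiR \<gamma> ^ i) $ n)"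
  proof (rule sum_mono)
    fix i assume "i \<in> {0..n}"
    have nn: "(PhiR \<gamma> ^ i) $ n \<ge> 0" by (rule PhiR_nonneg[OF g(1)])
    show "norm (KF $ i * (\<Phi> ^ i) $ n) \<le> (1 - (norm (h 0))^2) * (PhiR \<gamma> ^ i) $ n"
    proof (cases "i = 0")
      case True thus ?thesis using n by (simp add: pw)
    next
      case False
      have "norm (KF $ i * (\<Phi> ^ i) $ n) = norm (KF $ i) * (PhiR \<gamma> ^ i) $ n"
        using nn by (simp add: pw norm_mult)
      also have "\<dots> \<le> (1 - (norm (h 0))^2) * (PhiR \<gamma> ^ i) $ n"
        by (rule mult_right_mono[OF KFb nn]) (use False in simp)
      finally show ?thesis .
    qed
  qed
  also have "\<dots> = (1 - (norm (h 0))^2) * (\<Sum>i=0..n. (PhiR \<gamma> ^ i) $ n)" by (simp add: sum_distrib_left)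
  also have "\<dots> = (1 - (norm (h 0))^2) / (1 + \<gamma>)" by (simp add: PhiR_sum[OF g(1) n])
  finally show ?thesis .
qed

lemma coeff_of_sums:
  fixes f :: "complex \<Rightarrow> complex"
  assumes "\<forall>z\<in>ball 0 1. (\<lambda>n. c n * z^n) sums f z"
  shows "c n = (deriv ^^ n) f 0 / fact n"
proof -
  have ev: "eventually (\<lambda>z. z \<in> ball (0::complex) 1) (nhds 0)"
    by (rule eventually_nhds_in_open) auto
  have "f has_fps_expansion Abs_fps c"
    by (rule has_fps_expansionI) (use ev assms in \<open>auto elim!: eventually_mono\<close>)
  from fps_nth_fps_expansion[OF this, of n] show ?thesis by simp
qed

lemma deriv_coeff:
  fixes f :: "complex \<Rightarrow> complex"
  assumes "\<forall>z\<in>ball 0 1. (\<lambda>n. c n * z^n) sums f z"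
  shows "(deriv ^^ n) (deriv f) 0 / fact n = of_nat (Suc n) * c (Suc n)"
proof -
  have e: "(deriv ^^ n) (deriv f) = (deriv ^^ Suc n) f" by (simp only: funpow_Suc_right o_def)
  have "c (Suc n) = (deriv ^^ Suc n) f 0 / fact (Suc n)" by (rule coeff_of_sums[OF assms])
  hence X: "(deriv ^^ Suc n) f 0 = c (Suc n) * fact (Suc n)" by (simp del: fact_Suc)
  have "c (Suc n) * fact (Suc n) / fact n = c (Suc n) * (of_nat (Suc n) * fact n) / fact n"
    by (simp only: fact_Suc)
  also have "\<dots> = of_nat (Suc n) * c (Suc n)" by simp
  finally show ?thesis unfolding e X .
qed

lemma ball_sub_Omega:
  assumes g: "0 \<le> \<gamma>" "\<gamma> < 1"
  shows "ball 0 1 \<subseteq> Omega \<gamma>"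
proof
  fix z :: complex assume "z \<in> ball 0 1"
  hence z: "norm z < 1" by simp
  have "norm (- complex_of_real (\<gamma> / (1 - \<gamma>)) - z) \<le> norm (complex_of_real (\<gamma> / (1 - \<gamma>))) + norm z"
    by (metis norm_diff_ineq norm_minus_cancel norm_triangle_ineq4)
  also have "norm (complex_of_real (\<gamma> / (1 - \<gamma>))) = \<gamma> / (1 - \<gamma>)"
    unfolding norm_of_real using g by simp
  also have "\<gamma> / (1 - \<gamma>) + norm z < \<gamma> / (1 - \<gamma>) + 1" using z by simp
  also have "\<gamma> / (1 - \<gamma>) + 1 = 1 / (1 - \<gamma>)" using g by (simp add: field_simps)
  finally show "z \<in> Omega \<gamma>" unfolding Omega_def mem_ball dist_norm .
qed

lemma parseval_deriv:
  fixes f :: "complex \<Rightarrow> complex"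
  assumes holf: "f holomorphic_on ball 0 1" and ser: "\<forall>z\<in>ball 0 1. (\<lambda>n. c n * z^n) sums f z"
    and t: "0 < t" "t < 1"
  shows "summable (\<lambda>n. (real (Suc n))^2 * (norm (c (Suc n)))^2 * t^n)
     \<and> ((\<lambda>x. (norm (deriv f (circlepath 0 (sqrt t) x)))^2) has_integral
          (\<Sum>n. (real (Suc n))^2 * (norm (c (Suc n)))^2 * t^n)) {0..1}"
proof -
  have hol: "deriv f holomorphic_on ball 0 1" by (rule holomorphic_deriv[OF holf]) auto
  have e: "(norm ((deriv ^^ n) (deriv f) 0 / fact n))^2 * sqrt t^(2*n) = (real (Suc n))^2 * (norm (c (Suc n)))^2 * t^n" for n
  proof -
    have "sqrt t^(2*n) = t^n" using t by (simp add: power_mult)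
    moreover have "norm ((deriv ^^ n) (deriv f) 0 / fact n) = real (Suc n) * norm (c (Suc n))"
      unfolding deriv_coeff[OF ser] by (simp only: norm_mult norm_of_nat)
    ultimately show ?thesis by (simp add: power_mult_distrib)
  qed
  show ?thesis using parseval[OF hol, of "sqrt t"] t unfolding e by simp
qed

lemma le_sq_mult: "0 \<le> (x::real) \<Longrightarrow> x \<le> (real (Suc n))^2 * x"
proof -
  assume x: "0 \<le> x"
  have "1 \<le> (real (Suc n))^2" by simp
  from mult_right_mono[OF this x] show ?thesis by simp
qed

lemma le_sq_mult_r: "0 \<le> (r::real) \<Longrightarrow> x^2 * r^(Suc n) \<le> r * ((real (Suc n))^2 * x^2 * r^n)"
proof -
  assume r: "0 \<le> r"
  have "x^2 * r^(Suc n) \<le> ((real (Suc n))^2 * x^2) * r^(Suc n)"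
    by (rule mult_right_mono[OF le_sq_mult]) (use r in auto)
  thus ?thesis by (simp add: mult_ac)
qed

lemma part1:
  fixes \<gamma> k r :: real
  assumes g: "0 \<le> \<gamma>" "\<gamma> < 1" and k: "0 \<le> k" and adm: "admissible \<gamma> k h g a b"
    and r: "0 \<le> r" "r \<le> (1 + \<gamma>) / (2 + k + \<gamma>)"
  shows "bohr_ineq a b r"
proof -
  from adm have holh: "h holomorphic_on Omega \<gamma>" and holg: "g holomorphic_on Omega \<gamma>"
    and serh: "\<forall>z\<in>ball 0 1. (\<lambda>n. a n * z ^ n) sums h z"
    and serg: "\<forall>z\<in>ball 0 1. (\<lambda>n. b n * z ^ n) sums g z"
    and bdh: "\<forall>z\<in>Omega \<gamma>. norm (h z) \<le> 1"
    and dbd: "\<forall>z\<in>ball 0 1. norm (deriv g z) \<le> k * norm (deriv h z)"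
    unfolding admissible_def by auto
  have sub: "ball 0 1 \<subseteq> Omega \<gamma>" by (rule ball_sub_Omega[OF g])
  have holh1: "h holomorphic_on ball 0 1" by (rule holomorphic_on_subset[OF holh sub])
  have holg1: "g holomorphic_on ball 0 1" by (rule holomorphic_on_subset[OF holg sub])
  have ca: "a n = (deriv ^^ n) h 0 / fact n" for n by (rule coeff_of_sums[OF serh])
  have cb: "b n = (deriv ^^ n) g 0 / fact n" for n by (rule coeff_of_sums[OF serg])
  have a0: "a 0 = h 0" using ca[of 0] by simp
  have "(0::complex) \<in> ball 0 1" by simp
  hence "(0::complex) \<in> Omega \<gamma>" using sub by blast
  hence h0: "norm (h 0) \<le> 1" using bdh by blast
  define A where "A = (1 - (norm (a 0))^2) / (1 + \<gamma>)"
  have A0: "A \<ge> 0" unfolding A_def a0 using g h0 by (simp add: power_le_one)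
  have aA: "norm (a n) \<le> A" if "n \<ge> 1" for n
    unfolding A_def a0 by (subst ca, rule omega_coeff[OF g holh _ that]) (use bdh in auto)
  have r1: "r < 1"
  proof -
    have "(1 + \<gamma>) / (2 + k + \<gamma>) < 1" using g k by (simp add: field_simps)
    thus ?thesis using r by simp
  qed
  show ?thesis
  proof (cases "r = 0")
    case True
    thus ?thesis unfolding bohr_ineq_def a0 using h0 by (simp add: power_le_one)
  next
    case False
    hence rpos: "r > 0" using r by simp
    define \<alpha> where "\<alpha> n = (real (Suc n))^2 * (norm (a (Suc n)))^2" for n
    define \<beta> where "\<beta> n = (real (Suc n))^2 * (norm (b (Suc n)))^2" for n
    have PB: "summable (\<lambda>n. \<beta> n * t^n) \<and> summable (\<lambda>n. \<alpha> n * t^n)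
          \<and> (\<Sum>n. \<beta> n * t^n) \<le> k^2 * (\<Sum>n. \<alpha> n * t^n)" if t: "0 < t" "t < 1" for t
    proof -
      have pg: "summable (\<lambda>n. \<beta> n * t^n) \<and> ((\<lambda>x. (norm (deriv g (circlepath 0 (sqrt t) x)))^2) has_integral
          (\<Sum>n. \<beta> n * t^n)) {0..1}"
        using parseval_deriv[OF holg1 serg t] by (simp add: \<beta>_def)
      have ph: "summable (\<lambda>n. \<alpha> n * t^n) \<and> ((\<lambda>x. (norm (deriv h (circlepath 0 (sqrt t) x)))^2) has_integral
          (\<Sum>n. \<alpha> n * t^n)) {0..1}"
        using parseval_deriv[OF holh1 serh t] by (simp add: \<alpha>_def)
      have ph2: "((\<lambda>x. k^2 * (norm (deriv h (circlepath 0 (sqrt t) x)))^2) has_integral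
          (k^2 * (\<Sum>n. \<alpha> n * t^n))) {0..1}"
        using has_integral_mult_right ph by blast
      have "(\<Sum>n. \<beta> n * t^n) \<le> k^2 * (\<Sum>n. \<alpha> n * t^n)"
      proof (rule has_integral_le[OF conjunct2[OF pg] ph2])
        fix x :: real
        have "circlepath 0 (sqrt t) x \<in> ball 0 1" using t by (simp add: circlepath norm_mult)
        hence le: "norm (deriv g (circlepath 0 (sqrt t) x)) \<le> k * norm (deriv h (circlepath 0 (sqrt t) x))"
          using dbd by auto
        have "(norm (deriv g (circlepath 0 (sqrt t) x)))^2 \<le> (k * norm (deriv h (circlepath 0 (sqrt t) x)))^2"
          by (rule power_mono[OF le]) simp
        thus "(norm (deriv g (circlepath 0 (sqrt t) x)))^2 \<le> k^2 * (norm (deriv h (circlepath 0 (sqrt t) x)))^2"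
          by (simp add: power_mult_distrib)
      qed
      thus ?thesis using pg ph by simp
    qed
    define y where "y n = (norm (b (Suc n)))^2 - k^2 * (norm (a (Suc n)))^2" for n
    have yS: "summable (\<lambda>n. \<bar>y n\<bar> * real (Suc n)^2 * t^n)" if "0 \<le> t" "t < 1" for t
    proof (cases "t = 0")
      case True thus ?thesis by simp
    next
      case False
      hence t: "0 < t" "t < 1" using that by auto
      have s: "summable (\<lambda>n. \<beta> n * t^n + k^2 * (\<alpha> n * t^n))"
        using PB[OF t] by (intro summable_add summable_mult) auto
      show ?thesis
      proof (rule summable_comparison_test'[OF s])
        fix n
        have "\<bar>y n\<bar> \<le> (norm (b (Suc n)))^2 + k^2 * (norm (a (Suc n)))^2"
          unfolding y_def by (simp add: abs_le_iff)
        hence "\<bar>y n\<bar> * (real (Suc n)^2 * t^n) \<le> ((norm (b (Suc n)))^2 + k^2 * (norm (a (Suc n)))^2) * (real (Suc n)^2 * t^n)"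
          by (rule mult_right_mono) (use t in simp)
        thus "norm (\<bar>y n\<bar> * real (Suc n)^2 * t^n) \<le> \<beta> n * t^n + k^2 * (\<alpha> n * t^n)"
          using t by (simp add: \<alpha>_def \<beta>_def algebra_simps)
      qed
    qed
    have yP: "(\<Sum>n. y n * real (Suc n)^2 * t^n) \<le> 0" if "0 \<le> t" "t < 1" for t
    proof (cases "t = 0")
      case True
      have "(\<Sum>n. y n * real (Suc n)^2 * t^n) = y 0" using True by simp
      also have "y 0 \<le> 0"
      proof -
        have "norm (b 1) = norm (deriv g 0)" using cb[of 1] by simp
        also have "\<dots> \<le> k * norm (deriv h 0)" using dbd by simp
        also have "norm (deriv h 0) = norm (a 1)" using ca[of 1] by simp
        finally have "norm (b 1) \<le> k * norm (a 1)" .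
        hence "(norm (b 1))^2 \<le> (k * norm (a 1))^2" by (rule power_mono) simp
        thus ?thesis by (simp add: y_def power_mult_distrib)
      qed
      finally show ?thesis .
    next
      case False
      hence t: "0 < t" "t < 1" using that by auto
      have "(\<Sum>n. y n * real (Suc n)^2 * t^n) = (\<Sum>n. \<beta> n * t^n - k^2 * (\<alpha> n * t^n))"
        by (rule suminf_cong) (simp add: y_def \<alpha>_def \<beta>_def algebra_simps)
      also have "\<dots> = (\<Sum>n. \<beta> n * t^n) - k^2 * (\<Sum>n. \<alpha> n * t^n)"
        using PB[OF t] by (subst suminf_diff[symmetric]) (auto intro: summable_mult simp: suminf_mult)
      also have "\<dots> \<le> 0" using PB[OF t] by simp
      finally show ?thesis .
    qed
    have ode: "(\<Sum>n. y n * r^(Suc n)) \<le> 0" by (rule ode_mono[OF yS yP r(1) r1])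
    have sb2: "summable (\<lambda>n. (norm (b (Suc n)))^2 * r^(Suc n))"
    proof (rule summable_comparison_test'[OF summable_mult[OF conjunct1[OF PB[OF rpos r1]], of r]])
      fix n
      have "(norm (b (Suc n)))^2 * r^(Suc n) \<le> r * (\<beta> n * r^n)"
        unfolding \<beta>_def using le_sq_mult_r rpos by simp
      thus "norm ((norm (b (Suc n)))^2 * r^(Suc n)) \<le> r * (\<beta> n * r^n)" using rpos by simp
    qed
    have sa2: "summable (\<lambda>n. (norm (a (Suc n)))^2 * r^(Suc n))"
    proof (rule summable_comparison_test'[OF summable_mult[OF conjunct1[OF conjunct2[OF PB[OF rpos r1]]], of r]])
      fix n
      have "(norm (a (Suc n)))^2 * r^(Suc n) \<le> r * (\<alpha> n * r^n)"
        unfolding \<alpha>_def using le_sq_mult_r rpos by simp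
      thus "norm ((norm (a (Suc n)))^2 * r^(Suc n)) \<le> r * (\<alpha> n * r^n)" using rpos by simp
    qed
    define T where "T = r / (1 - r)"
    have Tsum: "(\<lambda>n. r^(Suc n)) sums T"
    proof -
      have "(\<lambda>n. r * r^n) sums (r * (1 / (1 - r)))"
        by (rule sums_mult[OF geometric_sums]) (use r r1 in simp)
      thus ?thesis by (simp add: T_def)
    qed
    have T0: "T \<ge> 0" using r r1 by (simp add: T_def)
    have sgeo: "summable (\<lambda>n. r^(Suc n))" using Tsum by (rule sums_summable)
    have sumA: "summable (\<lambda>n. A * r^(Suc n))" by (rule summable_mult[OF sgeo])
    have sumA2: "summable (\<lambda>n. A^2 * r^(Suc n))" by (rule summable_mult[OF sgeo])
    have aA': "norm (a (Suc n)) \<le> A" for n by (rule aA) simp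
    have sa1: "summable (\<lambda>n. norm (a (Suc n)) * r^(Suc n))"
      by (rule summable_comparison_test'[OF sumA]) (use aA' r in \<open>auto intro: mult_right_mono\<close>)
    have Sa: "(\<Sum>n. norm (a (Suc n)) * r^(Suc n)) \<le> A * T"
    proof -
      have "(\<Sum>n. norm (a (Suc n)) * r^(Suc n)) \<le> (\<Sum>n. A * r^(Suc n))"
        by (rule suminf_le[OF _ sa1 sumA]) (use aA' r in \<open>auto intro: mult_right_mono\<close>)
      also have "\<dots> = A * T" using sums_unique[OF Tsum] suminf_mult[OF sgeo] by simp
      finally show ?thesis .
    qed
    have Sa2: "(\<Sum>n. (norm (a (Suc n)))^2 * r^(Suc n)) \<le> A^2 * T"
    proof -
      have "(\<Sum>n. (norm (a (Suc n)))^2 * r^(Suc n)) \<le> (\<Sum>n. A^2 * r^(Suc n))"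
      proof (rule suminf_le[OF _ sa2 sumA2])
        fix n
        have "(norm (a (Suc n)))^2 \<le> A^2" by (rule power_mono[OF aA']) simp
        thus "(norm (a (Suc n)))^2 * r^(Suc n) \<le> A^2 * r^(Suc n)" by (rule mult_right_mono) (use r in simp)
      qed
      also have "\<dots> = A^2 * T" using sums_unique[OF Tsum] suminf_mult[OF sgeo] by simp
      finally show ?thesis .
    qed
    have Sb2: "(\<Sum>n. (norm (b (Suc n)))^2 * r^(Suc n)) \<le> k^2 * A^2 * T"
    proof -
      have "(\<Sum>n. y n * r^(Suc n)) = (\<Sum>n. (norm (b (Suc n)))^2 * r^(Suc n) - k^2 * ((norm (a (Suc n)))^2 * r^(Suc n)))"
        by (rule suminf_cong) (simp add: y_def algebra_simps)
      also have "\<dots> = (\<Sum>n. (norm (b (Suc n)))^2 * r^(Suc n)) - k^2 * (\<Sum>n. (norm (a (Suc n)))^2 * r^(Suc n))"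
      proof -
        have s_k: "summable (\<lambda>n. k^2 * ((norm (a (Suc n)))^2 * r^(Suc n)))" by (rule summable_mult[OF sa2])
        have "(\<Sum>n. (norm (b (Suc n)))^2 * r^(Suc n) - k^2 * ((norm (a (Suc n)))^2 * r^(Suc n)))
            = (\<Sum>n. (norm (b (Suc n)))^2 * r^(Suc n)) - (\<Sum>n. k^2 * ((norm (a (Suc n)))^2 * r^(Suc n)))"
          by (rule suminf_diff[OF sb2 s_k, symmetric])
        also have "(\<Sum>n. k^2 * ((norm (a (Suc n)))^2 * r^(Suc n))) = k^2 * (\<Sum>n. (norm (a (Suc n)))^2 * r^(Suc n))"
          by (rule suminf_mult[OF sa2])
        finally show ?thesis .
      qed
      finally have "(\<Sum>n. (norm (b (Suc n)))^2 * r^(Suc n)) \<le> k^2 * (\<Sum>n. (norm (a (Suc n)))^2 * r^(Suc n))"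
        using ode by simp
      also have "\<dots> \<le> k^2 * (A^2 * T)" by (rule mult_left_mono[OF Sa2]) simp
      finally show ?thesis by (simp add: mult_ac)
    qed
    have sb1: "summable (\<lambda>n. norm (b (Suc n)) * r^(Suc n))"
    proof (rule summable_comparison_test'[OF summable_add[OF sb2 sgeo]])
      fix n
      have "norm (b (Suc n)) \<le> (norm (b (Suc n)))^2 + 1"
      proof -
        have "2 * norm (b (Suc n)) \<le> (norm (b (Suc n)))^2 + 1"
          using sum_squares_bound[of "norm (b (Suc n))" 1] by simp
        moreover have "norm (b (Suc n)) \<ge> 0" by simp
        ultimately show ?thesis by linarith
      qed
      hence "norm (b (Suc n)) * r^(Suc n) \<le> ((norm (b (Suc n)))^2 + 1) * r^(Suc n)"
        by (rule mult_right_mono) (use r in simp)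
      thus "norm (norm (b (Suc n)) * r^(Suc n)) \<le> (norm (b (Suc n)))^2 * r^(Suc n) + r^(Suc n)"
        using r by (simp add: algebra_simps)
    qed
    have Sb: "(\<Sum>n. norm (b (Suc n)) * r^(Suc n)) \<le> k * A * T"
    proof (cases "k * A > 0")
      case True
      define e where "e = k * A"
      have e: "e > 0" using True by (simp add: e_def)
      have "(\<Sum>n. norm (b (Suc n)) * r^(Suc n)) \<le> (\<Sum>n. ((norm (b (Suc n)))^2 * r^(Suc n) / e + e * r^(Suc n)) / 2)"
      proof (rule suminf_le[OF _ sb1])
        show "summable (\<lambda>n. ((norm (b (Suc n)))^2 * r^(Suc n) / e + e * r^(Suc n)) / 2)"
          by (intro summable_divide summable_add summable_mult sb2 sgeo)
        fix n
        have "2 * e * norm (b (Suc n)) \<le> (norm (b (Suc n)))^2 + e^2"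
          using sum_squares_bound[of "norm (b (Suc n))" e] by (simp add: mult_ac)
        hence "norm (b (Suc n)) \<le> ((norm (b (Suc n)))^2 / e + e) / 2"
          using e by (simp add: field_simps power2_eq_square)
        hence "norm (b (Suc n)) * r^(Suc n) \<le> (((norm (b (Suc n)))^2 / e + e) / 2) * r^(Suc n)"
          by (rule mult_right_mono) (use r in simp)
        thus "norm (b (Suc n)) * r^(Suc n) \<le> ((norm (b (Suc n)))^2 * r^(Suc n) / e + e * r^(Suc n)) / 2"
          by (simp add: field_simps)
      qed
      also have "\<dots> = ((\<Sum>n. (norm (b (Suc n)))^2 * r^(Suc n)) / e + e * T) / 2"
      proof -
        have s1: "summable (\<lambda>n. (norm (b (Suc n)))^2 * r^(Suc n) / e)" by (rule summable_divide[OF sb2])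
        have s2: "summable (\<lambda>n. e * r^(Suc n))" by (rule summable_mult[OF sgeo])
        have "(\<Sum>n. ((norm (b (Suc n)))^2 * r^(Suc n) / e + e * r^(Suc n)) / 2)
            = (\<Sum>n. (norm (b (Suc n)))^2 * r^(Suc n) / e + e * r^(Suc n)) / 2"
          by (rule suminf_divide[OF summable_add[OF s1 s2]])
        also have "(\<Sum>n. (norm (b (Suc n)))^2 * r^(Suc n) / e + e * r^(Suc n))
            = (\<Sum>n. (norm (b (Suc n)))^2 * r^(Suc n) / e) + (\<Sum>n. e * r^(Suc n))"
          by (rule suminf_add[OF s1 s2, symmetric])
        also have "(\<Sum>n. (norm (b (Suc n)))^2 * r^(Suc n) / e) = (\<Sum>n. (norm (b (Suc n)))^2 * r^(Suc n)) / e"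
          by (rule suminf_divide[OF sb2])
        also have "(\<Sum>n. e * r^(Suc n)) = e * T" using sums_unique[OF Tsum] suminf_mult[OF sgeo] by simp
        finally show ?thesis .
      qed
      also have "\<dots> \<le> ((k^2 * A^2 * T) / e + e * T) / 2"
        using Sb2 e by (simp add: divide_right_mono)
      also have "\<dots> = e * T" using e by (simp add: e_def field_simps power2_eq_square)
      finally show ?thesis by (simp add: e_def)
    next
      case False
      moreover have "k * A \<ge> 0" using k A0 by simp
      ultimately have kA: "k * A = 0" by linarith
      have nn: "\<And>n. 0 \<le> (norm (b (Suc n)))^2 * r^(Suc n)" using r by simp
      have "(\<Sum>n. (norm (b (Suc n)))^2 * r^(Suc n)) \<le> 0" using Sb2 kA by (simp add: power_mult_distrib[symmetric])
      moreover have "(\<Sum>n. (norm (b (Suc n)))^2 * r^(Suc n)) \<ge> 0" by (rule suminf_nonneg[OF sb2 nn])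
      ultimately have "(\<Sum>n. (norm (b (Suc n)))^2 * r^(Suc n)) = 0" by simp
      hence z: "\<forall>n. (norm (b (Suc n)))^2 * r^(Suc n) = 0" using suminf_eq_zero_iff[OF sb2 nn] by simp
      have "b (Suc n) = 0" for n using z[rule_format, of n] rpos by simp
      hence "(\<Sum>n. norm (b (Suc n)) * r^(Suc n)) = 0" by simp
      moreover have "k * A * T = 0" using kA by simp
      ultimately show ?thesis by linarith
    qed
    have tot: "summable (\<lambda>n. (norm (a (Suc n)) + norm (b (Suc n))) * r ^ Suc n)"
      using summable_add[OF sa1 sb1] by (simp add: algebra_simps)
    have "(\<Sum>n. (norm (a (Suc n)) + norm (b (Suc n))) * r ^ Suc n)
        = (\<Sum>n. norm (a (Suc n)) * r^(Suc n)) + (\<Sum>n. norm (b (Suc n)) * r^(Suc n))"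
      using suminf_add[OF sa1 sb1] by (simp add: algebra_simps)
    also have "\<dots> \<le> A * T + k * A * T" using Sa Sb by simp
    also have "\<dots> \<le> 1 - (norm (a 0))^2"
    proof -
      define D where "D = 1 - (norm (a 0))^2"
      have D0: "D \<ge> 0" using A0 g by (simp add: A_def D_def field_simps)
      have q: "(1 + k) * r \<le> (1 + \<gamma>) * (1 - r)"
      proof -
        have "r * (2 + k + \<gamma>) \<le> 1 + \<gamma>" using r g k by (simp add: field_simps)
        thus ?thesis by (simp add: algebra_simps)
      qed
      have AD: "A = D / (1 + \<gamma>)" by (simp add: A_def D_def)
      have "A * T + k * A * T = (1 + k) * A * T" by (simp add: algebra_simps)
      also have "\<dots> = (1 + k) * (D / (1 + \<gamma>)) * (r / (1 - r))" by (simp only: AD T_def)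
      also have "\<dots> = D * (((1 + k) * r) / ((1 + \<gamma>) * (1 - r)))"
      proof -
        have "1 + \<gamma> \<noteq> 0" "1 - r \<noteq> 0" using g r1 by auto
        thus ?thesis by (simp add: field_simps)
      qed
      also have "\<dots> \<le> D * 1"
      proof (rule mult_left_mono[OF _ D0])
        show "((1 + k) * r) / ((1 + \<gamma>) * (1 - r)) \<le> 1" using q g r1 by (simp add: divide_le_eq_1)
      qed
      finally show ?thesis by (simp add: D_def)
    qed
    finally show ?thesis unfolding bohr_ineq_def using tot by simp
  qed
qed

lemma bohr_mono:
  assumes "bohr_ineq a b r" "0 \<le> r'" "r' \<le> r"
  shows "bohr_ineq a b r'"
proof -
  have s: "summable (\<lambda>n. (norm (a (Suc n)) + norm (b (Suc n))) * r ^ Suc n)"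
    and le: "(norm (a 0))\<^sup>2 + (\<Sum>n. (norm (a (Suc n)) + norm (b (Suc n))) * r ^ Suc n) \<le> 1"
    using assms(1) unfolding bohr_ineq_def by auto
  have tl: "(norm (a (Suc n)) + norm (b (Suc n))) * r' ^ Suc n \<le> (norm (a (Suc n)) + norm (b (Suc n))) * r ^ Suc n" for n
    by (rule mult_left_mono[OF power_mono]) (use assms in auto)
  have s': "summable (\<lambda>n. (norm (a (Suc n)) + norm (b (Suc n))) * r' ^ Suc n)"
    by (rule summable_comparison_test'[OF s]) (use assms tl in auto)
  have "(\<Sum>n. (norm (a (Suc n)) + norm (b (Suc n))) * r' ^ Suc n) \<le> (\<Sum>n. (norm (a (Suc n)) + norm (b (Suc n))) * r ^ Suc n)"
    by (rule suminf_le[OF tl s' s])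
  thus ?thesis unfolding bohr_ineq_def using s' le by simp
qed

lemma real_ge1_notin_Omega:
  assumes g: "0 \<le> \<gamma>" "\<gamma> < 1" and x: "x \<ge> 1"
  shows "complex_of_real x \<notin> Omega \<gamma>"
proof
  assume "complex_of_real x \<in> Omega \<gamma>"
  hence "norm (- complex_of_real (\<gamma> / (1 - \<gamma>)) - complex_of_real x) < 1 / (1 - \<gamma>)"
    unfolding Omega_def mem_ball dist_norm .
  also have "- complex_of_real (\<gamma> / (1 - \<gamma>)) - complex_of_real x = - complex_of_real (\<gamma> / (1 - \<gamma>) + x)" by simp
  finally have "\<bar>\<gamma> / (1 - \<gamma>) + x\<bar> < 1 / (1 - \<gamma>)" by (simp only: norm_minus_cancel norm_of_real)
  moreover have "\<gamma> / (1 - \<gamma>) + x \<ge> 1 / (1 - \<gamma>)"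
  proof -
    have "1 / (1 - \<gamma>) = \<gamma> / (1 - \<gamma>) + 1" using g by (simp add: field_simps)
    thus ?thesis using x by simp
  qed
  ultimately show False by simp
qed

lemma example_bound:
  fixes z :: complex
  assumes g: "0 \<le> \<gamma>" "\<gamma> < 1" and al: "0 \<le> \<alpha>" "\<alpha> < 1" and z: "z \<in> Omega \<gamma>"
  shows "norm (of_real (\<alpha> * (1 + \<gamma>)) - of_real (\<alpha> * \<gamma> + 1) * z) \<le> norm (of_real (1 + \<gamma>) - of_real (\<gamma> + \<alpha>) * z)"
proof -
  obtain x y where zxy: "z = Complex x y" by (cases z)
  have "norm (- complex_of_real (\<gamma> / (1 - \<gamma>)) - z) < 1 / (1 - \<gamma>)"
    using z unfolding Omega_def mem_ball dist_norm .
  hence "(norm (- complex_of_real (\<gamma> / (1 - \<gamma>)) - z))^2 < (1 / (1 - \<gamma>))^2"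
    by (rule power_strict_mono) auto
  hence "(\<gamma> / (1 - \<gamma>) + x)^2 + y^2 < (1 / (1 - \<gamma>))^2"
    unfolding zxy by (simp only: cmod_power2) (simp add: power2_eq_square algebra_simps)
  hence "(1 - \<gamma>)^2 * ((\<gamma> / (1 - \<gamma>) + x)^2 + y^2) < (1 - \<gamma>)^2 * (1 / (1 - \<gamma>))^2"
    by (rule mult_strict_left_mono) (use g in simp)
  moreover have "(1 - \<gamma>)^2 * ((\<gamma> / (1 - \<gamma>) + x)^2 + y^2) = (\<gamma> + (1 - \<gamma>) * x)^2 + (1 - \<gamma>)^2 * y^2"
  proof -
    have d: "1 - \<gamma> \<noteq> 0" using g by simp
    have e1: "\<gamma> / (1 - \<gamma>) + x = (\<gamma> + (1 - \<gamma>) * x) / (1 - \<gamma>)" using d by (simp add: field_simps)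
    show ?thesis unfolding e1 power_divide distrib_left using d by simp
  qed
  moreover have "(1 - \<gamma>)^2 * (1 / (1 - \<gamma>))^2 = 1" using g by (simp add: power_divide)
  ultimately have "(\<gamma> + (1 - \<gamma>) * x)^2 + (1 - \<gamma>)^2 * y^2 < 1" by simp
  hence W0: "(1 - \<gamma>) * ((1 + \<gamma>) - 2 * \<gamma> * x - (1 - \<gamma>) * (x^2 + y^2)) > 0"
    by (simp add: power2_eq_square algebra_simps)
  hence W: "(1 + \<gamma>) - 2 * \<gamma> * x - (1 - \<gamma>) * (x^2 + y^2) > 0"
    using g by (simp add: zero_less_mult_iff)
  have key: "(norm (of_real (1 + \<gamma>) - of_real (\<gamma> + \<alpha>) * z))^2 - (norm (of_real (\<alpha> * (1 + \<gamma>)) - of_real (\<alpha> * \<gamma> + 1) * z))^2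
      = (1 - \<alpha>^2) * (1 + \<gamma>) * ((1 + \<gamma>) - 2 * \<gamma> * x - (1 - \<gamma>) * (x^2 + y^2))"
    unfolding zxy by (simp only: cmod_power2) (simp add: power2_eq_square algebra_simps)
  have "(1 - \<alpha>^2) * (1 + \<gamma>) * ((1 + \<gamma>) - 2 * \<gamma> * x - (1 - \<gamma>) * (x^2 + y^2)) \<ge> 0"
  proof (intro mult_nonneg_nonneg)
    have "\<alpha>^2 \<le> 1" using al power_le_one[of \<alpha> 2] by simp
    thus "0 \<le> 1 - \<alpha>^2" by simp
  qed (use g W in auto)
  hence "(norm (of_real (\<alpha> * (1 + \<gamma>)) - of_real (\<alpha> * \<gamma> + 1) * z))^2 \<le> (norm (of_real (1 + \<gamma>) - of_real (\<gamma> + \<alpha>) * z))^2"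
    using key by linarith
  thus ?thesis by (rule power2_le_imp_le) simp
qed

lemma part2:
  fixes \<gamma> k r :: real
  assumes g: "0 \<le> \<gamma>" "\<gamma> < 1" and k: "0 \<le> k" and r: "(1 + \<gamma>) / (2 + k + \<gamma>) < r"
  shows "\<exists>h g a b. admissible \<gamma> k h g a b \<and> \<not> bohr_ineq a b r"
proof -
  define R where "R = (1 + \<gamma>) / (2 + k + \<gamma>)"
  have R0: "R > 0" using g k by (simp add: R_def)
  have R1: "R < 1" using g k by (simp add: R_def field_simps)
  define r' where "r' = min r ((R + 1) / 2)"
  have rR: "R < r" using r by (simp add: R_def)
  have r'1: "R < r'" using rR R1 by (simp add: r'_def)
  have "r' \<le> (R + 1) / 2" unfolding r'_def by (rule min.cobounded2)
  moreover have "(R + 1) / 2 < 1" using R1 by simp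
  ultimately have r'2: "r' < 1" by (rule le_less_trans)
  have r'3: "r' \<le> r" by (simp add: r'_def)
  have r'0: "r' > 0" using R0 r'1 by simp
  define L where "L = (1 + \<gamma>) / r' - (1 + k + \<gamma>)"
  have L1: "L < 1"
  proof -
    have "(1 + \<gamma>) / r' < (1 + \<gamma>) / R"
      by (rule divide_strict_left_mono[OF r'1]) (use g R0 r'0 in auto)
    also have "(1 + \<gamma>) / R = 2 + k + \<gamma>" using g k by (simp add: R_def)
    finally show ?thesis by (simp add: L_def)
  qed
  define \<alpha> where "\<alpha> = (max L 0 + 1) / 2"
  have al0: "0 \<le> \<alpha>" and al1: "\<alpha> < 1" and alL: "L < \<alpha>" using L1 by (auto simp: \<alpha>_def)
  define q where "q = (\<gamma> + \<alpha>) / (1 + \<gamma>)"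
  have q0: "0 \<le> q" and q1: "q < 1" using g al0 al1 by (auto simp: q_def field_simps)
  define c where "c = (1 - \<alpha>^2) / (1 + \<gamma>)"
  have c0: "c > 0"
  proof -
    have "\<alpha>^2 < 1" using al0 al1 power_strict_mono[of \<alpha> 1 2] by simp
    thus ?thesis using g by (simp add: c_def)
  qed
  define h where "h z = of_real \<alpha> - of_real c * z / (1 - of_real q * z)" for z :: complex
  define gg where "gg z = of_real k * (h z - of_real \<alpha>)" for z :: complex
  define a where "a n = (if n = 0 then complex_of_real \<alpha> else - complex_of_real (c * q^(n-1)))" for n :: nat
  define b where "b n = (if n = 0 then 0 else of_real k * a n)" for n :: nat
  have den: "1 - of_real q * z \<noteq> 0" if "z \<in> Omega \<gamma>" for z
  proof
    assume e: "1 - of_real q * z = 0"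
    hence qn: "q \<noteq> 0" by auto
    have "z = of_real (1 / q)" using e qn by (simp add: field_simps)
    moreover have "1 / q \<ge> 1" using q0 q1 qn by (simp add: field_simps)
    ultimately show False using real_ge1_notin_Omega[OF g, of "1/q"] that by simp
  qed
  have holh: "h holomorphic_on Omega \<gamma>"
    unfolding h_def by (intro holomorphic_intros) (use den in auto)
  have holg: "gg holomorphic_on Omega \<gamma>"
    unfolding gg_def by (intro holomorphic_intros holh)
  have ser0: "(\<lambda>n. - of_real c * z * (of_real q * z)^n) sums (- of_real c * z / (1 - of_real q * z))"
    if "z \<in> ball 0 1" for z :: complex
  proof -
    have "norm (of_real q * z) < 1"
    proof -
      have "norm (of_real q * z) = q * norm z" using q0 by (simp add: norm_mult)
      also have "\<dots> \<le> q" by (rule mult_left_le) (use that q0 in auto)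
      finally show ?thesis using q1 by simp
    qed
    hence "(\<lambda>n. (of_real q * z)^n) sums (1 / (1 - of_real q * z))" by (rule geometric_sums)
    from sums_mult[OF this, of "- of_real c * z"] show ?thesis by simp
  qed
  have serh: "\<forall>z\<in>ball 0 1. (\<lambda>n. a n * z ^ n) sums h z"
  proof
    fix z :: complex assume z: "z \<in> ball 0 1"
    have "(\<lambda>n. a (Suc n) * z ^ (Suc n)) sums (- of_real c * z / (1 - of_real q * z))"
      using ser0[OF z] by (simp add: a_def power_mult_distrib mult_ac)
    from sums_Suc[OF this] show "(\<lambda>n. a n * z ^ n) sums h z"
      by (simp add: a_def h_def)
  qed
  have serg: "\<forall>z\<in>ball 0 1. (\<lambda>n. b n * z ^ n) sums gg z"
  proof
    fix z :: complex assume z: "z \<in> ball 0 1"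
    have "(\<lambda>n. of_real k * (- of_real c * z * (of_real q * z)^n)) sums (of_real k * (- of_real c * z / (1 - of_real q * z)))"
      by (rule sums_mult[OF ser0[OF z]])
    hence "(\<lambda>n. b (Suc n) * z ^ (Suc n)) sums (of_real k * (- of_real c * z / (1 - of_real q * z)))"
      by (simp add: a_def b_def power_mult_distrib mult_ac)
    from sums_Suc[OF this] show "(\<lambda>n. b n * z ^ n) sums gg z"
      by (simp add: b_def gg_def h_def)
  qed
  have bdh: "\<forall>z\<in>Omega \<gamma>. norm (h z) \<le> 1"
  proof
    fix z assume z: "z \<in> Omega \<gamma>"
    define D where "D = 1 - of_real q * z"
    have D0: "D \<noteq> 0" using den[OF z] by (simp add: D_def)
    have g1: "(of_real (1 + \<gamma>) :: complex) \<noteq> 0"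
    proof -
      have "1 + \<gamma> \<noteq> 0" using g by simp
      thus ?thesis by (simp only: of_real_eq_0_iff) simp
    qed
    have Dn: "of_real (1 + \<gamma>) - of_real (\<gamma> + \<alpha>) * z = of_real (1 + \<gamma>) * D"
    proof -
      have "(1 + \<gamma>) * q = \<gamma> + \<alpha>" using g by (simp add: q_def)
      hence "of_real (\<gamma> + \<alpha>) = (of_real (1 + \<gamma>) * of_real q :: complex)" by (metis of_real_mult)
      thus ?thesis by (simp add: D_def algebra_simps)
    qed
    have Nn: "of_real (\<alpha> * (1 + \<gamma>)) - of_real (\<alpha> * \<gamma> + 1) * z = of_real (1 + \<gamma>) * (of_real \<alpha> * D - of_real c * z)"
    proof -
      have "(1 + \<gamma>) * q = \<gamma> + \<alpha>" using g by (simp add: q_def)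
      have "(1 + \<gamma>) * c = 1 - \<alpha>^2" using g by (simp add: c_def)
      have e: "\<alpha> * \<gamma> + 1 = \<alpha> * ((1 + \<gamma>) * q) + (1 + \<gamma>) * c"
        unfolding \<open>(1 + \<gamma>) * q = \<gamma> + \<alpha>\<close> \<open>(1 + \<gamma>) * c = 1 - \<alpha>^2\<close> by (simp add: algebra_simps power2_eq_square)
      show ?thesis unfolding e D_def by (simp add: algebra_simps)
    qed
    have hz0: "h z = of_real \<alpha> - of_real c * z / D" by (simp add: h_def D_def)
    have hz: "h z = (of_real \<alpha> * D - of_real c * z) / D"
      unfolding hz0 using D0 by (simp add: field_simps)
    also have "\<dots> = (of_real (1 + \<gamma>) * (of_real \<alpha> * D - of_real c * z)) / (of_real (1 + \<gamma>) * D)"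
      using g1 by simp
    also have "\<dots> = (of_real (\<alpha> * (1 + \<gamma>)) - of_real (\<alpha> * \<gamma> + 1) * z) / (of_real (1 + \<gamma>) - of_real (\<gamma> + \<alpha>) * z)"
      unfolding Nn Dn ..
    finally have hz2: "h z = \<dots>" .
    have nzD: "of_real (1 + \<gamma>) - of_real (\<gamma> + \<alpha>) * z \<noteq> (0::complex)" unfolding Dn using g1 D0 by simp
    show "norm (h z) \<le> 1" unfolding hz2 norm_divide
      using example_bound[OF g al0 al1 z] nzD by (simp add: divide_le_eq_1)
  qed
  have dbd: "\<forall>z\<in>ball 0 1. norm (deriv gg z) \<le> k * norm (deriv h z)"
  proof
    fix z :: complex assume z: "z \<in> ball 0 1"
    have zO: "z \<in> Omega \<gamma>" using ball_sub_Omega[OF g] z by blast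
    have oO: "open (Omega \<gamma>)" by (simp add: Omega_def)
    have dh: "(h has_field_derivative deriv h z) (at z)" by (rule holomorphic_derivI[OF holh oO zO])
    have "(gg has_field_derivative (of_real k * (deriv h z - 0))) (at z)"
      unfolding gg_def by (rule DERIV_cmult[OF DERIV_diff[OF dh DERIV_const]])
    hence "deriv gg z = of_real k * deriv h z" by (simp add: DERIV_imp_deriv)
    thus "norm (deriv gg z) \<le> k * norm (deriv h z)" using k by (simp add: norm_mult)
  qed
  have adm: "admissible \<gamma> k h gg a b"
    unfolding admissible_def using holh holg serh serg bdh dbd by (simp add: b_def)
  have notb: "\<not> bohr_ineq a b r'"
  proof
    assume B: "bohr_ineq a b r'"
    have tm: "(norm (a (Suc n)) + norm (b (Suc n))) * r' ^ Suc n = ((1 + k) * c * r') * (q * r')^n" for n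
      using c0 q0 k r'0 by (simp add: a_def b_def norm_mult norm_power power_mult_distrib algebra_simps)
    have qr: "norm (q * r') < 1"
    proof -
      have "q * r' \<le> q" by (rule mult_left_le) (use q0 r'2 in auto)
      thus ?thesis using q0 q1 r'0 by simp
    qed
    have sm: "(\<lambda>n. ((1 + k) * c * r') * (q * r')^n) sums (((1 + k) * c * r') * (1 / (1 - q * r')))"
      by (rule sums_mult[OF geometric_sums[OF qr]])
    have "(norm (a 0))\<^sup>2 + (\<Sum>n. (norm (a (Suc n)) + norm (b (Suc n))) * r' ^ Suc n) \<le> 1"
      using B unfolding bohr_ineq_def by simp
    hence le: "\<alpha>^2 + ((1 + k) * c * r') * (1 / (1 - q * r')) \<le> 1"
      unfolding tm sums_unique[OF sm, symmetric] using al0 by (simp add: a_def)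
    have qr1: "1 - q * r' > 0" using qr q0 r'0 by simp
    have "r' * (1 + k + \<gamma> + \<alpha>) > 1 + \<gamma>"
    proof -
      have "(1 + \<gamma>) / r' < 1 + k + \<gamma> + \<alpha>" using alL by (simp add: L_def)
      thus ?thesis using r'0 by (simp add: field_simps)
    qed
    moreover have "(1 + \<gamma>) * (1 - q * r') = (1 + \<gamma>) - (\<gamma> + \<alpha>) * r'"
    proof -
      have hq: "(1 + \<gamma>) * q = \<gamma> + \<alpha>" using g by (simp add: q_def)
      have "(1 + \<gamma>) * (1 - q * r') = (1 + \<gamma>) - ((1 + \<gamma>) * q) * r'" by (simp add: algebra_simps)
      also have "\<dots> = (1 + \<gamma>) - (\<gamma> + \<alpha>) * r'" by (simp only: hq)
      finally show ?thesis .
    qed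
    moreover have "r' * (1 + k + \<gamma> + \<alpha>) = (1 + k) * r' + (\<gamma> + \<alpha>) * r'" by (simp add: algebra_simps)
    ultimately have "(1 + k) * r' > (1 + \<gamma>) * (1 - q * r')" by linarith
    hence "c * ((1 + k) * r') > c * ((1 + \<gamma>) * (1 - q * r'))" using c0 by simp
    hence "((1 + k) * c * r') * (1 / (1 - q * r')) > (1 + \<gamma>) * c"
      using qr1 by (simp add: field_simps)
    moreover have "(1 + \<gamma>) * c = 1 - \<alpha>^2" using g by (simp add: c_def)
    ultimately show False using le by simp
  qed
  have "\<not> bohr_ineq a b r" using bohr_mono[of a b r r'] notb r'0 r'3 by auto
  thus ?thesis using adm by blast
qed

theorem corollary4p2:
  fixes \<gamma> k :: real
  assumes "0 \<le> \<gamma>" "\<gamma> < 1" "0 \<le> k" "k < 1"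
  shows "(\<forall>h g a b r. admissible \<gamma> k h g a b \<longrightarrow> 0 \<le> r \<longrightarrow> r \<le> (1 + \<gamma>) / (2 + k + \<gamma>)
            \<longrightarrow> bohr_ineq a b r)
       \<and> (\<forall>r. (1 + \<gamma>) / (2 + k + \<gamma>) < r \<longrightarrow>
            (\<exists>h g a b. admissible \<gamma> k h g a b \<and> \<not> bohr_ineq a b r))"
proof (intro conjI allI impI)
  fix h g a b r
  assume "admissible \<gamma> k h g a b" "0 \<le> r" "r \<le> (1 + \<gamma>) / (2 + k + \<gamma>)"
  thus "bohr_ineq a b r" using part1[of \<gamma> k h g a b r] assms by blast
next
  fix r :: real
  assume "(1 + \<gamma>) / (2 + k + \<gamma>) < r"
  thus "\<exists>h g a b. admissible \<gamma> k h g a b \<and> \<not> bohr_ineq a b r" using part2[of \<gamma> k r] assms by blast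
qed

end
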